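(* Let $d\ge3$, $n_1,\dots,n_d,k$ positive integers, $\mathfrak{L}$ an invertible linear transform as in the context, $\tau>0$, $0<p<1$ and $w=(w_{i,j})$ nonnegative weights. Let $\boldsymbol{\mathcal{A}}=\boldsymbol{\mathcal{Q}}_1*_{\mathfrak{L}}\boldsymbol{\mathcal{B}}*_{\mathfrak{L}}\boldsymbol{\mathcal{Q}}_2^T\in\mathbb{R}^{n_1\times n_2\times n_3\times\cdots\times n_d}$, where $\boldsymbol{\mathcal{Q}}_1\in\mathbb{R}^{n_1\times k\times n_3\times\cdots\times n_d}$ and $\boldsymbol{\mathcal{Q}}_2\in\mathbb{R}^{n_2\times k\times n_3\times\cdots\times n_d}$ are partially orthogonal and $\boldsymbol{\mathcal{B}}\in\mathbb{R}^{k\times k\times n_3\times\cdots\times n_d}$. Then $$\boldsymbol{\mathcal{D}}_{\boldsymbol{\mathcal{W}},p,\tau}(\boldsymbol{\mathcal{A}})=\boldsymbol{\mathcal{Q}}_1*_{\mathfrak{L}}\boldsymbol{\mathcal{D}}_{\boldsymbol{\mathcal{W}},p,\tau}(\boldsymbol{\mathcal{B}})*_{\mathfrak{L}}\boldsymbol{\mathcal{Q}}_2^T.$$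
   Context: Transform: for $i=3,\dots,d$ let $\bm U_{n_i}\in\mathbb{C}^{n_i\times n_i}$ satisfy $\bm U_{n_i}\bm U_{n_i}^H=\bm U_{n_i}^H\bm U_{n_i}=\alpha_i\bm I_{n_i}$, $\alpha_i>0$. For a tensor $\boldsymbol{\mathcal{A}}$ of size $m_1\times m_2\times n_3\times\cdots\times n_d$, $\mathfrak{L}(\boldsymbol{\mathcal{A}})=\boldsymbol{\mathcal{A}}\times_3\bm U_{n_3}\cdots\times_d\bm U_{n_d}$ (mode-$k$ product $\boldsymbol{\mathcal{B}}=\boldsymbol{\mathcal{A}}\times_k\bm M$ iff $\bm B_{(k)}=\bm M\bm A_{(k)}$), with inverse $\mathfrak{L}^{-1}$. Frontal slices $\boldsymbol{\mathcal{A}}^{<j>}=\boldsymbol{\mathcal{A}}(:,:,i_3,\dots,i_d)$, $j=i_3+\sum_{a=4}^d(i_a-1)\prod_{b=3}^{a-1}n_b\in\{1,\dots,N\}$, $N=n_3\cdots n_d$. t-product: $\boldsymbol{\mathcal{C}}=\boldsymbol{\mathcal{A}}*_{\mathfrak{L}}\boldsymbol{\mathcal{B}}$ iff $\mathfrak{L}(\boldsymbol{\mathcal{C}})^{<j>}=\mathfrak{L}(\boldsymbol{\mathcal{A}})^{<j>}\mathfrak{L}(\boldsymbol{\mathcal{B}})^{<j>}$ for all $j$. Transpose: $\mathfrak{L}(\boldsymbol{\mathcal{A}}^T)^{<j>}=(\mathfrak{L}(\boldsymbol{\mathcal{A}})^{<j>})^H$. Identity tensor: $\mathfrak{L}(\boldsymbol{\mathcal{I}})^{<j>}=\bm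 I$ for all $j$. $\boldsymbol{\mathcal{Q}}$ is partially orthogonal if $\boldsymbol{\mathcal{Q}}^T*_{\mathfrak{L}}\boldsymbol{\mathcal{Q}}=\boldsymbol{\mathcal{I}}$, orthogonal if also $\boldsymbol{\mathcal{Q}}*_{\mathfrak{L}}\boldsymbol{\mathcal{Q}}^T=\boldsymbol{\mathcal{I}}$. f-diagonal: all frontal slices diagonal. T-SVD: $\boldsymbol{\mathcal{A}}=\boldsymbol{\mathcal{U}}*_{\mathfrak{L}}\boldsymbol{\mathcal{S}}*_{\mathfrak{L}}\boldsymbol{\mathcal{V}}^T$, $\boldsymbol{\mathcal{U}},\boldsymbol{\mathcal{V}}$ orthogonal, $\boldsymbol{\mathcal{S}}$ f-diagonal, obtained from slice-wise SVDs of $\mathfrak{L}(\boldsymbol{\mathcal{A}})^{<j>}$ with singular values in non-increasing order. GST: for $s\in\mathbb{R}$, $w\ge0$, $0<p<1$, $\delta=[2w(1-p)]^{\frac1{2-p}}+wp[2w(1-p)]^{\frac{p-1}{2-p}}$; $\mathrm{GST}(s,w,p)=0$ if $|s|\le\delta$, else $\mathrm{sign}(s)\hat\alpha^*$ with $\hat\alpha^*$ the largest positive root of $\alpha+wp\alpha^{p-1}=|s|$; $\mathrm{GST}(s,0,p)=s$. GTSVT: for a tensor $\boldsymbol{\mathcal{A}}$ of size $m_1\times m_2\times n_3\times\cdots\times n_d$ with T-SVD $\boldsymbol{\mathcal{U}}*_{\mathfrak{L}}\boldsymbol{\mathcal{S}}*_{\mathfrak{L}}\boldsymbol{\mathcal{V}}^T$,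 $\boldsymbol{\mathcal{D}}_{\boldsymbol{\mathcal{W}},p,\tau}(\boldsymbol{\mathcal{A}})=\boldsymbol{\mathcal{U}}*_{\mathfrak{L}}\mathfrak{L}^{-1}(\hat{\boldsymbol{\mathcal{S}}})*_{\mathfrak{L}}\boldsymbol{\mathcal{V}}^T$, where $\hat{\boldsymbol{\mathcal{S}}}$ is f-diagonal with $\hat{\boldsymbol{\mathcal{S}}}^{<j>}(i,i)=\mathrm{GST}\big(\mathfrak{L}(\boldsymbol{\mathcal{S}})^{<j>}(i,i),\tau w_{i,j},p\big)$ for $i\le\min(m_1,m_2)$; $\boldsymbol{\mathcal{W}}$ denotes the f-diagonal weight tensor with $\boldsymbol{\mathcal{W}}^{<j>}(i,i)=w_{i,j}$, the same weights being used regardless of the first two dimensions of the argument. *)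

theory Defs
  imports Complex_Main
begin

text \<open>A tensor of size m1 x m2 x n3 x ... x nd is a function
  (i1, i2, is) \<mapsto> entry, with 0-based indices i1 < m1, i2 < m2 and the list is = [i3,...,id]
  (0-based, length d-2, is!a < ns!a where ns = [n3,...,nd]); entries outside
  the index range are required to be 0 (predicate is_tensor) and all operations
  below produce such tensors.  Matrices are functions nat => nat => complex (0-based).
  The transform is given by Us a (the matrix U_{n_(a+3)}) and al a (its alpha).\<close>

type_synonym tensor = "nat \<Rightarrow> nat \<Rightarrow> nat list \<Rightarrow> complex"
type_synonym cmat = "nat \<Rightarrow> nat \<Rightarrow> complex"

definition valid_idx :: "nat list \<Rightarrow> nat list \<Rightarrow> bool" where
  "valid_idx ns is \<longleftrightarrow> length is = length ns \<and> (\<forall>a<length ns. is ! a < ns ! a)"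

definition in_range :: "nat \<Rightarrow> nat \<Rightarrow> nat list \<Rightarrow> nat \<Rightarrow> nat \<Rightarrow> nat list \<Rightarrow> bool" where
  "in_range m1 m2 ns i1 i2 is \<longleftrightarrow> i1 < m1 \<and> i2 < m2 \<and> valid_idx ns is"

definition is_tensor :: "nat \<Rightarrow> nat \<Rightarrow> nat list \<Rightarrow> tensor \<Rightarrow> bool" where
  "is_tensor m1 m2 ns A \<longleftrightarrow> (\<forall>i1 i2 is. \<not> in_range m1 m2 ns i1 i2 is \<longrightarrow> A i1 i2 is = 0)"

definition real_tensor :: "tensor \<Rightarrow> bool" where
  "real_tensor A \<longleftrightarrow> (\<forall>i1 i2 is. A i1 i2 is \<in> \<real>)"

text \<open>Linear index j (1-based) of the frontal slice with 0-based index list is.\<close>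
definition lin_idx :: "nat list \<Rightarrow> nat list \<Rightarrow> nat" where
  "lin_idx ns is = 1 + (\<Sum>a<length ns. is ! a * (\<Prod>b<a. ns ! b))"

text \<open>Mode-(a+3) product: B = A x_(a+3) M iff B_(a+3) = M A_(a+3).\<close>
definition mode_prod :: "nat \<Rightarrow> nat \<Rightarrow> nat list \<Rightarrow> nat \<Rightarrow> cmat \<Rightarrow> tensor \<Rightarrow> tensor" where
  "mode_prod m1 m2 ns a M A = (\<lambda>i1 i2 is. if in_range m1 m2 ns i1 i2 is
      then (\<Sum>j<ns ! a. M (is ! a) j * A i1 i2 (is[a := j])) else 0)"

definition is_transform :: "nat list \<Rightarrow> (nat \<Rightarrow> cmat) \<Rightarrow> (nat \<Rightarrow> real) \<Rightarrow> bool" where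
  "is_transform ns Us al \<longleftrightarrow> (\<forall>a<length ns. al a > 0 \<and>
     (\<forall>r<ns ! a. \<forall>c<ns ! a.
        (\<Sum>l<ns ! a. Us a r l * cnj (Us a c l)) = (if r = c then of_real (al a) else 0) \<and>
        (\<Sum>l<ns ! a. cnj (Us a l r) * Us a l c) = (if r = c then of_real (al a) else 0)))"

definition Ltr :: "nat \<Rightarrow> nat \<Rightarrow> nat list \<Rightarrow> (nat \<Rightarrow> cmat) \<Rightarrow> tensor \<Rightarrow> tensor" where
  "Ltr m1 m2 ns Us A = fold (\<lambda>a X. mode_prod m1 m2 ns a (Us a) X) [0..<length ns] A"

text \<open>Inverse transform: mode products with U_{n_i}^{-1} = U_{n_i}^H / alpha_i, in reverse order.\<close>
definition Linv :: "nat \<Rightarrow> nat \<Rightarrow> nat list \<Rightarrow> (nat \<Rightarrow> cmat) \<Rightarrow> (nat \<Rightarrow> real) \<Rightarrow> tensor \<Rightarrow> tensor" where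
  "Linv m1 m2 ns Us al A = fold (\<lambda>a X. mode_prod m1 m2 ns a (\<lambda>r c. cnj (Us a c r) / of_real (al a)) X)
      (rev [0..<length ns]) A"

definition tprod :: "nat \<Rightarrow> nat \<Rightarrow> nat \<Rightarrow> nat list \<Rightarrow> (nat \<Rightarrow> cmat) \<Rightarrow> (nat \<Rightarrow> real) \<Rightarrow> tensor \<Rightarrow> tensor \<Rightarrow> tensor" where
  "tprod m1 r m2 ns Us al A B = Linv m1 m2 ns Us al (\<lambda>i1 i2 is. if in_range m1 m2 ns i1 i2 is
      then (\<Sum>l<r. Ltr m1 r ns Us A i1 l is * Ltr r m2 ns Us B l i2 is) else 0)"

definition ttrans :: "nat \<Rightarrow> nat \<Rightarrow> nat list \<Rightarrow> (nat \<Rightarrow> cmat) \<Rightarrow> (nat \<Rightarrow> real) \<Rightarrow> tensor \<Rightarrow> tensor" where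
  "ttrans m1 m2 ns Us al A = Linv m2 m1 ns Us al (\<lambda>i1 i2 is. if in_range m2 m1 ns i1 i2 is
      then cnj (Ltr m1 m2 ns Us A i2 i1 is) else 0)"

definition tid :: "nat \<Rightarrow> nat list \<Rightarrow> (nat \<Rightarrow> cmat) \<Rightarrow> (nat \<Rightarrow> real) \<Rightarrow> tensor" where
  "tid m ns Us al = Linv m m ns Us al (\<lambda>i1 i2 is. if in_range m m ns i1 i2 is \<and> i1 = i2 then 1 else 0)"

definition part_orth :: "nat \<Rightarrow> nat \<Rightarrow> nat list \<Rightarrow> (nat \<Rightarrow> cmat) \<Rightarrow> (nat \<Rightarrow> real) \<Rightarrow> tensor \<Rightarrow> bool" where
  "part_orth m k ns Us al Q \<longleftrightarrow> tprod k m k ns Us al (ttrans m k ns Us al Q) Q = tid k ns Us al"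

definition orth :: "nat \<Rightarrow> nat list \<Rightarrow> (nat \<Rightarrow> cmat) \<Rightarrow> (nat \<Rightarrow> real) \<Rightarrow> tensor \<Rightarrow> bool" where
  "orth m ns Us al Q \<longleftrightarrow> part_orth m m ns Us al Q \<and>
     tprod m m m ns Us al Q (ttrans m m ns Us al Q) = tid m ns Us al"

definition f_diag :: "tensor \<Rightarrow> bool" where
  "f_diag A \<longleftrightarrow> (\<forall>i1 i2 is. i1 \<noteq> i2 \<longrightarrow> A i1 i2 is = 0)"

definition is_TSVD :: "nat \<Rightarrow> nat \<Rightarrow> nat list \<Rightarrow> (nat \<Rightarrow> cmat) \<Rightarrow> (nat \<Rightarrow> real) \<Rightarrow>
    tensor \<Rightarrow> tensor \<Rightarrow> tensor \<Rightarrow> tensor \<Rightarrow> bool" where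
  "is_TSVD m1 m2 ns Us al A U S V \<longleftrightarrow>
     is_tensor m1 m1 ns U \<and> is_tensor m1 m2 ns S \<and> is_tensor m2 m2 ns V \<and>
     orth m1 ns Us al U \<and> orth m2 ns Us al V \<and> f_diag S \<and>
     A = tprod m1 m2 m2 ns Us al (tprod m1 m1 m2 ns Us al U S) (ttrans m2 m2 ns Us al V) \<and>
     (\<forall>is. valid_idx ns is \<longrightarrow>
        (\<forall>i<min m1 m2. Ltr m1 m2 ns Us S i i is \<in> \<real> \<and> 0 \<le> Re (Ltr m1 m2 ns Us S i i is)) \<and>
        (\<forall>i. Suc i < min m1 m2 \<longrightarrow>
           Re (Ltr m1 m2 ns Us S (Suc i) (Suc i) is) \<le> Re (Ltr m1 m2 ns Us S i i is)))"

definition gst_delta :: "real \<Rightarrow> real \<Rightarrow> real" where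
  "gst_delta w p = (2 * w * (1 - p)) powr (1 / (2 - p))
      + w * p * (2 * w * (1 - p)) powr ((p - 1) / (2 - p))"

definition GST :: "real \<Rightarrow> real \<Rightarrow> real \<Rightarrow> real" where
  "GST s w p = (if w = 0 then s
     else if \<bar>s\<bar> \<le> gst_delta w p then 0
     else sgn s * (GREATEST a. a > 0 \<and> a + w * p * a powr (p - 1) = \<bar>s\<bar>))"

text \<open>X is a value of the GTSVT D_{W,p,tau}(A) for the m1 x m2 tensor A, computed from
  some T-SVD of A; weights w i j (i = 1..min(m1,m2), j = 1..N, 1-based).\<close>
definition is_gtsvt :: "nat \<Rightarrow> nat \<Rightarrow> nat list \<Rightarrow> (nat \<Rightarrow> cmat) \<Rightarrow> (nat \<Rightarrow> real) \<Rightarrow>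
    (nat \<Rightarrow> nat \<Rightarrow> real) \<Rightarrow> real \<Rightarrow> real \<Rightarrow> tensor \<Rightarrow> tensor \<Rightarrow> bool" where
  "is_gtsvt m1 m2 ns Us al w p tau A X \<longleftrightarrow> (\<exists>U S V. is_TSVD m1 m2 ns Us al A U S V \<and>
     X = tprod m1 m2 m2 ns Us al
           (tprod m1 m1 m2 ns Us al U
              (Linv m1 m2 ns Us al (\<lambda>i1 i2 is. if in_range m1 m2 ns i1 i2 is \<and> i1 = i2
                 then complex_of_real (GST (Re (Ltr m1 m2 ns Us S i1 i1 is))
                                           (tau * w (Suc i1) (lin_idx ns is)) p)
                 else 0)))
           (ttrans m2 m2 ns Us al V))"

end

theory Submission
  imports Defs
begin


definition ocols :: "nat \<Rightarrow> nat \<Rightarrow> cmat \<Rightarrow> bool" where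
  "ocols m r M \<longleftrightarrow> (\<forall>i<r. \<forall>j<r. (\<Sum>l<m. cnj (M l i) * M l j) = (if i = j then 1 else 0))"

definition orows :: "nat \<Rightarrow> nat \<Rightarrow> cmat \<Rightarrow> bool" where
  "orows m r M \<longleftrightarrow> (\<forall>i<r. \<forall>j<r. (\<Sum>l<m. M i l * cnj (M j l)) = (if i = j then 1 else 0))"

definition unitaryM :: "nat \<Rightarrow> cmat \<Rightarrow> bool" where
  "unitaryM m M \<longleftrightarrow> ocols m m M \<and> orows m m M"

lemma proj_orth:
  assumes "ocols m r X" "a < r"
  shows "(\<Sum>j<m. cnj (X j a) * (e j - (\<Sum>i<r. (\<Sum>j'<m. cnj (X j' i) * e j') * X j i))) = 0"
proof -
  let ?c = "\<lambda>i. \<Sum>j'<m. cnj (X j' i) * e j'"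
  have "(\<Sum>j<m. cnj (X j a) * (e j - (\<Sum>i<r. ?c i * X j i)))
      = ?c a - (\<Sum>j<m. \<Sum>i<r. ?c i * (cnj (X j a) * X j i))"
    by (simp add: right_diff_distrib sum_subtractf sum_distrib_left mult.commute mult.left_commute)
  also have "(\<Sum>j<m. \<Sum>i<r. ?c i * (cnj (X j a) * X j i)) = (\<Sum>i<r. ?c i * (\<Sum>j<m. cnj (X j a) * X j i))"
    by (subst sum.swap) (simp add: sum_distrib_left)
  also have "\<dots> = (\<Sum>i<r. ?c i * (if a = i then 1 else 0))"
    using assms unfolding ocols_def by (intro sum.cong) auto
  also have "\<dots> = ?c a" using assms(2) by (simp add: if_distrib cong: if_cong)
  finally show ?thesis by simp
qed

lemma proj_norm:
  assumes "ocols m r X"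
  shows "(\<Sum>j<m. cnj (e j - (\<Sum>i<r. (\<Sum>j'<m. cnj (X j' i) * e j') * X j i)) * (e j - (\<Sum>i<r. (\<Sum>j'<m. cnj (X j' i) * e j') * X j i)))
    = (\<Sum>j<m. cnj (e j) * e j) - (\<Sum>i<r. cnj (\<Sum>j'<m. cnj (X j' i) * e j') * (\<Sum>j'<m. cnj (X j' i) * e j'))"
proof -
  define c where "c = (\<lambda>i. \<Sum>j'<m. cnj (X j' i) * e j')"
  define y where "y = (\<lambda>j. e j - (\<Sum>i<r. c i * X j i))"
  have orth: "(\<Sum>j<m. cnj (X j a) * y j) = 0" if "a < r" for a
    using proj_orth[OF assms that, of e] unfolding y_def c_def by simp
  have orth': "(\<Sum>j<m. cnj (y j) * X j a) = 0" if "a < r" for a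
  proof -
    have "(\<Sum>j<m. cnj (y j) * X j a) = cnj (\<Sum>j<m. cnj (X j a) * y j)" by (simp add: mult.commute)
    then show ?thesis using orth[OF that] by simp
  qed
  have "(\<Sum>j<m. cnj (y j) * y j) = (\<Sum>j<m. cnj (y j) * e j - (\<Sum>i<r. c i * (cnj (y j) * X j i)))"
  proof (intro sum.cong refl)
    fix j
    have "cnj (y j) * y j = cnj (y j) * (e j - (\<Sum>i<r. c i * X j i))" by (simp add: y_def)
    then show "cnj (y j) * y j = cnj (y j) * e j - (\<Sum>i<r. c i * (cnj (y j) * X j i))"
      by (simp add: right_diff_distrib sum_distrib_left mult.commute mult.left_commute)
  qed
  also have "\<dots> = (\<Sum>j<m. cnj (y j) * e j) - (\<Sum>i<r. c i * (\<Sum>j<m. cnj (y j) * X j i))"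
    by (simp add: sum_subtractf sum_distrib_left sum.swap[of _ "{..<m}"])
  also have "(\<Sum>i<r. c i * (\<Sum>j<m. cnj (y j) * X j i)) = 0" using orth' by simp
  also have "(\<Sum>j<m. cnj (y j) * e j) = (\<Sum>j<m. cnj (e j) * e j - (\<Sum>i<r. cnj (c i) * (cnj (X j i) * e j)))"
    by (intro sum.cong) (simp_all add: y_def right_diff_distrib left_diff_distrib sum_distrib_left sum_distrib_right mult.commute mult.left_commute)
  also have "\<dots> = (\<Sum>j<m. cnj (e j) * e j) - (\<Sum>i<r. cnj (c i) * (\<Sum>j<m. cnj (X j i) * e j))"
    by (simp add: sum_subtractf sum_distrib_left sum.swap[of _ "{..<m}"])
  finally show ?thesis unfolding y_def c_def by simp
qed

lemma sum_cnj_sq: "(\<Sum>j\<in>A. cnj (f j) * f j) = complex_of_real (\<Sum>j\<in>A. (cmod (f j))^2)"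
  unfolding of_real_sum complex_norm_square by (simp add: mult.commute)

lemma bessel_gen:
  assumes "ocols m r X"
  shows "(\<Sum>i<r. (cmod (\<Sum>j'<m. cnj (X j' i) * e j'))^2) + (\<Sum>j<m. (cmod (e j - (\<Sum>i<r. (\<Sum>j'<m. cnj (X j' i) * e j') * X j i)))^2)
     = (\<Sum>j<m. (cmod (e j))^2)"
proof -
  have "complex_of_real ((\<Sum>i<r. (cmod (\<Sum>j'<m. cnj (X j' i) * e j'))^2) + (\<Sum>j<m. (cmod (e j - (\<Sum>i<r. (\<Sum>j'<m. cnj (X j' i) * e j') * X j i)))^2))
     = complex_of_real (\<Sum>j<m. (cmod (e j))^2)"
    using proj_norm[OF assms, of e] unfolding of_real_add sum_cnj_sq[symmetric] by simp
  then show ?thesis using of_real_eq_iff by blast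
qed

lemma bessel_row:
  assumes "ocols m r X" "j < m"
  shows "(\<Sum>i<r. (cmod (X j i))^2) \<le> 1"
proof -
  define e where "e = (\<lambda>l. if l = j then (1::complex) else 0)"
  have c: "(\<Sum>j'<m. cnj (X j' i) * e j') = cnj (X j i)" for i
    using assms(2) by (simp add: e_def if_distrib cong: if_cong)
  have n: "(\<Sum>l<m. (cmod (e l))^2) = 1"
  proof -
    have "(\<Sum>l<m. (cmod (e l))^2) = (\<Sum>l<m. (if l = j then 1 else 0))" by (rule sum.cong) (auto simp: e_def)
    then show ?thesis using assms(2) by simp
  qed
  have "(\<Sum>i<r. (cmod (X j i))^2) + (\<Sum>l<m. (cmod (e l - (\<Sum>i<r. cnj (X j i) * X l i)))^2) = 1"
    using bessel_gen[OF assms(1), of e] unfolding c n by simp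
  moreover have "0 \<le> (\<Sum>l<m. (cmod (e l - (\<Sum>i<r. cnj (X j i) * X l i)))^2)" by (intro sum_nonneg) simp
  ultimately show ?thesis by linarith
qed

lemma col_norm:
  assumes "ocols m r X" "i < r"
  shows "(\<Sum>j<m. (cmod (X j i))^2) = 1"
proof -
  have "complex_of_real (\<Sum>j<m. (cmod (X j i))^2) = 1"
    using assms unfolding ocols_def sum_cnj_sq[symmetric] by auto
  then show ?thesis by (metis of_real_eq_1_iff)
qed

lemma total_sq:
  assumes "ocols m r X"
  shows "(\<Sum>j<m. \<Sum>i<r. (cmod (X j i))^2) = real r"
proof -
  have "(\<Sum>j<m. \<Sum>i<r. (cmod (X j i))^2) = (\<Sum>i<r. \<Sum>j<m. (cmod (X j i))^2)" by (rule sum.swap)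
  also have "\<dots> = (\<Sum>i<r. 1)" using col_norm[OF assms] by simp
  finally show ?thesis by simp
qed

lemma ocols_le:
  assumes "ocols m r X"
  shows "r \<le> m"
proof -
  have "real r = (\<Sum>j<m. \<Sum>i<r. (cmod (X j i))^2)" using total_sq[OF assms] by simp
  also have "\<dots> \<le> (\<Sum>j<m. 1)" by (intro sum_mono bessel_row[OF assms]) simp
  finally show ?thesis by simp
qed

lemma extend1:
  assumes "ocols m r X" "r < m"
  shows "\<exists>z. (\<forall>a<r. (\<Sum>j<m. cnj (X j a) * z j) = 0) \<and> (\<Sum>j<m. cnj (z j) * z j) = 1"
proof -
  have "\<exists>j<m. (\<Sum>i<r. (cmod (X j i))^2) < 1"
  proof (rule ccontr)
    assume "\<not> ?thesis"
    then have "(\<Sum>j<m. (1::real)) \<le> (\<Sum>j<m. \<Sum>i<r. (cmod (X j i))^2)" by (intro sum_mono) (metis lessThan_iff linorder_not_le)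
    then show False using total_sq[OF assms(1)] assms(2) by simp
  qed
  then obtain j where j: "j < m" "(\<Sum>i<r. (cmod (X j i))^2) < 1" by blast
  define e where "e = (\<lambda>l. if l = j then (1::complex) else 0)"
  have c: "(\<Sum>j'<m. cnj (X j' i) * e j') = cnj (X j i)" for i
    using j(1) by (simp add: e_def if_distrib cong: if_cong)
  have n: "(\<Sum>l<m. (cmod (e l))^2) = 1"
  proof -
    have "(\<Sum>l<m. (cmod (e l))^2) = (\<Sum>l<m. (if l = j then 1 else 0))" by (rule sum.cong) (auto simp: e_def)
    then show ?thesis using j(1) by simp
  qed
  define y where "y = (\<lambda>l. e l - (\<Sum>i<r. (\<Sum>j'<m. cnj (X j' i) * e j') * X l i))"
  have "(\<Sum>i<r. (cmod (X j i))^2) + (\<Sum>l<m. (cmod (y l))^2) = 1"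
    using bessel_gen[OF assms(1), of e] unfolding c n y_def by simp
  then have pos: "(\<Sum>l<m. (cmod (y l))^2) > 0" using j(2) by linarith
  define nn where "nn = sqrt (\<Sum>l<m. (cmod (y l))^2)"
  have nn: "nn > 0" "nn^2 = (\<Sum>l<m. (cmod (y l))^2)" using pos by (auto simp: nn_def)
  define z where "z = (\<lambda>l. y l / complex_of_real nn)"
  have orth: "(\<Sum>j<m. cnj (X j a) * y j) = 0" if "a < r" for a
    using proj_orth[OF assms(1) that, of e] unfolding y_def by simp
  show ?thesis
  proof (intro exI conjI allI impI)
    fix a assume "a < r"
    have "(\<Sum>j<m. cnj (X j a) * z j) = (\<Sum>j<m. cnj (X j a) * y j) / complex_of_real nn"
      by (simp add: z_def sum_divide_distrib)
    then show "(\<Sum>j<m. cnj (X j a) * z j) = 0" using orth[OF \<open>a < r\<close>] by simp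
  next
    have "(\<Sum>j<m. cnj (z j) * z j) = (\<Sum>j<m. cnj (y j) * y j) / complex_of_real (nn^2)"
      by (simp add: z_def sum_divide_distrib power2_eq_square)
    also have "\<dots> = 1" unfolding sum_cnj_sq nn(2)[symmetric] using nn(1) by simp
    finally show "(\<Sum>j<m. cnj (z j) * z j) = 1" .
  qed
qed

lemma extend_ocols:
  assumes "ocols m r X"
  shows "\<exists>M. ocols m m M \<and> (\<forall>i l. l < r \<longrightarrow> M i l = X i l)"
proof -
  have "r \<le> m" using ocols_le[OF assms] .
  have "\<forall>r X. m - r = d \<longrightarrow> ocols m r X \<longrightarrow> r \<le> m \<longrightarrow> (\<exists>M. ocols m m M \<and> (\<forall>i l. l < r \<longrightarrow> M i l = X i l))" for d
  proof (induction d)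
    case 0
    then show ?case by (metis diff_is_0_eq le_antisym)
  next
    case (Suc d)
    show ?case
    proof (intro allI impI)
      fix r X assume h: "m - r = Suc d" "ocols m r X" "r \<le> m"
      then have "r < m" by simp
      obtain z where z: "\<forall>a<r. (\<Sum>j<m. cnj (X j a) * z j) = 0" "(\<Sum>j<m. cnj (z j) * z j) = 1"
        using extend1[OF h(2) \<open>r < m\<close>] by blast
      define X' where "X' = (\<lambda>i l. if l = r then z i else X i l)"
      have "ocols m (Suc r) X'"
        unfolding ocols_def
      proof (intro allI impI)
        fix i j assume ij: "i < Suc r" "j < Suc r"
        show "(\<Sum>l<m. cnj (X' l i) * X' l j) = (if i = j then 1 else 0)"
        proof (cases "i = r")
          case True
          show ?thesis
          proof (cases "j = r")
            case True
            then show ?thesis using \<open>i = r\<close> z(2) by (simp add: X'_def)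
          next
            case False
            then have "j < r" using ij by simp
            have "(\<Sum>l<m. cnj (X' l i) * X' l j) = cnj (\<Sum>l<m. cnj (X l j) * z l)"
              using \<open>i = r\<close> False by (simp add: X'_def mult.commute)
            then show ?thesis using z(1) \<open>j < r\<close> False \<open>i = r\<close> by simp
          qed
        next
          case False
          then have "i < r" using ij by simp
          show ?thesis
          proof (cases "j = r")
            case True
            then show ?thesis using \<open>i < r\<close> z(1) by (simp add: X'_def)
          next
            case False
            then have "j < r" using ij by simp
            then show ?thesis using \<open>i < r\<close> h(2) \<open>i \<noteq> r\<close> False by (simp add: X'_def ocols_def)
          qed
        qed
      qed
      moreover have "m - Suc r = d" using h(1) by simp
      ultimately obtain M where "ocols m m M" "\<forall>i l. l < Suc r \<longrightarrow> M i l = X' i l"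
        using Suc.IH[rule_format, of "Suc r" X'] \<open>r < m\<close> by (meson Suc_leI)
      then show "\<exists>M. ocols m m M \<and> (\<forall>i l. l < r \<longrightarrow> M i l = X i l)"
        by (intro exI[of _ M]) (auto simp: X'_def)
    qed
  qed
  then show ?thesis using assms \<open>r \<le> m\<close> by blast
qed

lemma ocols_orows:
  assumes "ocols m m M"
  shows "orows m m M"
  unfolding orows_def
proof (intro allI impI)
  fix i j assume ij: "i < m" "j < m"
  let ?P = "\<lambda>j. (\<Sum>i<m. (cmod (M j i))^2)"
  have le: "?P j \<le> 1" if "j < m" for j using bessel_row[OF assms that] .
  have "(\<Sum>j<m. 1 - ?P j) = 0" using total_sq[OF assms] by (simp add: sum_subtractf)
  then have "\<forall>j\<in>{..<m}. 1 - ?P j = 0" using le by (subst sum_nonneg_eq_0_iff[symmetric]) auto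
  then have Pj: "?P j = 1" using ij by simp
  define e where "e = (\<lambda>l. if l = j then (1::complex) else 0)"
  have c: "(\<Sum>j'<m. cnj (M j' t) * e j') = cnj (M j t)" for t
    using ij by (simp add: e_def if_distrib cong: if_cong)
  have n: "(\<Sum>l<m. (cmod (e l))^2) = 1"
  proof -
    have "(\<Sum>l<m. (cmod (e l))^2) = (\<Sum>l<m. (if l = j then 1 else 0))" by (rule sum.cong) (auto simp: e_def)
    then show ?thesis using ij by simp
  qed
  have "?P j + (\<Sum>l<m. (cmod (e l - (\<Sum>t<m. cnj (M j t) * M l t)))^2) = 1"
    using bessel_gen[OF assms, of e] unfolding c n by simp
  then have "(\<Sum>l<m. (cmod (e l - (\<Sum>t<m. cnj (M j t) * M l t)))^2) = 0" using Pj by simp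
  then have "\<forall>l\<in>{..<m}. (cmod (e l - (\<Sum>t<m. cnj (M j t) * M l t)))^2 = 0"
    by (subst sum_nonneg_eq_0_iff[symmetric]) auto
  then have "e i = (\<Sum>t<m. cnj (M j t) * M i t)" using ij by simp
  then show "(\<Sum>l<m. M i l * cnj (M j l)) = (if i = j then 1 else 0)"
    by (simp add: e_def mult.commute)
qed

lemma ext_unitary:
  assumes "ocols m r X"
  shows "r \<le> m \<and> (\<exists>M. unitaryM m M \<and> (\<forall>i l. l < r \<longrightarrow> M i l = X i l))"
  using ocols_le[OF assms] extend_ocols[OF assms] ocols_orows unfolding unitaryM_def by blast




lemma sum_restrict:
  fixes r m :: nat
  assumes "r \<le> m" "\<And>l. r \<le> l \<Longrightarrow> l < m \<Longrightarrow> f l = 0"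
  shows "(\<Sum>l<m. f l) = (\<Sum>l<r. f l)"
proof (rule sum.mono_neutral_right)
  show "\<forall>i\<in>{..<m} - {..<r}. f i = 0"
  proof
    fix i assume "i \<in> {..<m} - {..<r}"
    then have "r \<le> i" "i < m" by auto
    then show "f i = 0" by (rule assms(2))
  qed
qed (use assms(1) in auto)

lemma sandwich:
  "(\<Sum>l<k. (\<Sum>a<k. Q1 i a * U' a l) * h l * cnj (\<Sum>b<k. Q2 j b * V' b l)) =
   (\<Sum>l<k. (\<Sum>l'<k. Q1 i l' * (\<Sum>l''<k. U' l' l'' * h l'' * cnj (V' l l''))) * cnj (Q2 j l))"
proof -
  have "(\<Sum>l<k. (\<Sum>a<k. Q1 i a * U' a l) * h l * cnj (\<Sum>b<k. Q2 j b * V' b l)) =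
        (\<Sum>l<k. \<Sum>a<k. \<Sum>b<k. Q1 i a * U' a l * h l * cnj (V' b l) * cnj (Q2 j b))"
    by (simp add: sum_distrib_left sum_distrib_right mult_ac)
  also have "\<dots> = (\<Sum>a<k. \<Sum>l<k. \<Sum>b<k. Q1 i a * U' a l * h l * cnj (V' b l) * cnj (Q2 j b))"
    by (rule sum.swap)
  also have "\<dots> = (\<Sum>a<k. \<Sum>b<k. \<Sum>l<k. Q1 i a * U' a l * h l * cnj (V' b l) * cnj (Q2 j b))"
    by (intro sum.cong refl sum.swap)
  also have "\<dots> = (\<Sum>b<k. \<Sum>a<k. \<Sum>l<k. Q1 i a * U' a l * h l * cnj (V' b l) * cnj (Q2 j b))"
    by (rule sum.swap)
  also have "\<dots> = (\<Sum>l<k. (\<Sum>l'<k. Q1 i l' * (\<Sum>l''<k. U' l' l'' * h l'' * cnj (V' l l''))) * cnj (Q2 j l))"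
    by (simp add: sum_distrib_left sum_distrib_right mult_ac)
  finally show ?thesis .
qed

lemma ocols_mult:
  assumes "ocols n k Q" "ocols k r W"
  shows "ocols n r (\<lambda>i l. \<Sum>a<k. Q i a * W a l)"
  unfolding ocols_def
proof (intro allI impI)
  fix p q assume pq: "p < r" "q < r"
  have "(\<Sum>i<n. cnj (\<Sum>a<k. Q i a * W a p) * (\<Sum>b<k. Q i b * W b q))
      = (\<Sum>i<n. \<Sum>a<k. \<Sum>b<k. cnj (W a p) * W b q * (cnj (Q i a) * Q i b))"
    by (simp add: sum_distrib_left sum_distrib_right mult_ac)
  also have "\<dots> = (\<Sum>a<k. \<Sum>b<k. \<Sum>i<n. cnj (W a p) * W b q * (cnj (Q i a) * Q i b))"
    by (subst sum.swap) (intro sum.cong refl sum.swap)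
  also have "\<dots> = (\<Sum>a<k. \<Sum>b<k. cnj (W a p) * W b q * (if a = b then 1 else 0))"
    using assms(1) unfolding ocols_def by (intro sum.cong refl) (simp add: sum_distrib_left[symmetric])
  also have "\<dots> = (\<Sum>a<k. cnj (W a p) * W a q)"
    by (intro sum.cong refl) (simp add: if_distrib cong: if_cong)
  also have "\<dots> = (if p = q then 1 else 0)" using assms(2) pq unfolding ocols_def by simp
  finally show "(\<Sum>i<n. cnj (\<Sum>a<k. Q i a * W a p) * (\<Sum>b<k. Q i b * W b q)) = (if p = q then 1 else 0)" .
qed

lemma slice_sup:
  assumes "ocols n1 k Q1" "ocols n2 k Q2" "unitaryM k U'" "unitaryM k V'"
  shows "k \<le> n1 \<and> k \<le> n2 \<and> (\<exists>U V. unitaryM n1 U \<and> unitaryM n2 V \<and>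
    (\<forall>h i j. i < n1 \<longrightarrow> j < n2 \<longrightarrow>
      (\<Sum>l<min n1 n2. U i l * (if l < k then h l else 0) * cnj (V j l)) =
      (\<Sum>l<k. (\<Sum>l'<k. Q1 i l' * (\<Sum>l''<k. U' l' l'' * h l'' * cnj (V' l l''))) * cnj (Q2 j l))))"
proof -
  have o1: "ocols n1 k (\<lambda>i l. \<Sum>a<k. Q1 i a * U' a l)"
    using ocols_mult[OF assms(1)] assms(3) unfolding unitaryM_def by blast
  have o2: "ocols n2 k (\<lambda>i l. \<Sum>a<k. Q2 i a * V' a l)"
    using ocols_mult[OF assms(2)] assms(4) unfolding unitaryM_def by blast
  obtain U where U: "k \<le> n1" "unitaryM n1 U" "\<forall>i l. l < k \<longrightarrow> U i l = (\<Sum>a<k. Q1 i a * U' a l)"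
    using ext_unitary[OF o1] by blast
  obtain V where V: "k \<le> n2" "unitaryM n2 V" "\<forall>i l. l < k \<longrightarrow> V i l = (\<Sum>a<k. Q2 i a * V' a l)"
    using ext_unitary[OF o2] by blast
  have "(\<Sum>l<min n1 n2. U i l * (if l < k then h l else 0) * cnj (V j l)) =
      (\<Sum>l<k. (\<Sum>l'<k. Q1 i l' * (\<Sum>l''<k. U' l' l'' * h l'' * cnj (V' l l''))) * cnj (Q2 j l))" for h i j
  proof -
    have "(\<Sum>l<min n1 n2. U i l * (if l < k then h l else 0) * cnj (V j l)) =
          (\<Sum>l<k. U i l * (if l < k then h l else 0) * cnj (V j l))"
      by (rule sum_restrict) (use U(1) V(1) in auto)
    also have "\<dots> = (\<Sum>l<k. (\<Sum>a<k. Q1 i a * U' a l) * h l * cnj (\<Sum>b<k. Q2 j b * V' b l))"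
      using U(3) V(3) by (intro sum.cong) auto
    finally show ?thesis using sandwich by simp
  qed
  then show ?thesis using U V by blast
qed

lemma proj_coef:
  assumes "ocols n k Q" "\<forall>i<n. u i = (\<Sum>b<k. Q i b * z b)" "a < k"
  shows "(\<Sum>i<n. cnj (Q i a) * u i) = z a"
proof -
  have "(\<Sum>i<n. cnj (Q i a) * u i) = (\<Sum>i<n. \<Sum>b<k. z b * (cnj (Q i a) * Q i b))"
    using assms(2) by (intro sum.cong) (auto simp: sum_distrib_left mult_ac)
  also have "\<dots> = (\<Sum>b<k. z b * (\<Sum>i<n. cnj (Q i a) * Q i b))"
    by (subst sum.swap) (simp add: sum_distrib_left)
  also have "\<dots> = (\<Sum>b<k. z b * (if a = b then 1 else 0))"
    using assms(1,3) unfolding ocols_def by (intro sum.cong) auto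
  also have "\<dots> = z a" using assms(3) by (simp add: if_distrib cong: if_cong)
  finally show ?thesis .
qed

lemma recon:
  assumes "ocols n k Q" "\<forall>i<n. u i = (\<Sum>b<k. Q i b * z b)"
  shows "\<forall>i<n. u i = (\<Sum>a<k. Q i a * (\<Sum>i'<n. cnj (Q i' a) * u i'))"
proof (intro allI impI)
  fix i assume "i < n"
  have "(\<Sum>i'<n. cnj (Q i' a) * u i') = z a" if "a < k" for a using proj_coef[OF assms that] .
  then show "u i = (\<Sum>a<k. Q i a * (\<Sum>i'<n. cnj (Q i' a) * u i'))"
    using assms(2) \<open>i < n\<close> by simp
qed

lemma isometry:
  assumes "ocols n k Q"
  shows "(\<Sum>i<n. cnj (\<Sum>a<k. Q i a * x a) * (\<Sum>b<k. Q i b * y b)) = (\<Sum>a<k. cnj (x a) * y a)"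
proof -
  have "(\<Sum>i<n. cnj (\<Sum>a<k. Q i a * x a) * (\<Sum>b<k. Q i b * y b))
      = (\<Sum>i<n. \<Sum>a<k. \<Sum>b<k. cnj (x a) * y b * (cnj (Q i a) * Q i b))"
    by (simp add: sum_distrib_left sum_distrib_right mult_ac)
  also have "\<dots> = (\<Sum>a<k. \<Sum>b<k. \<Sum>i<n. cnj (x a) * y b * (cnj (Q i a) * Q i b))"
    by (subst sum.swap) (intro sum.cong refl sum.swap)
  also have "\<dots> = (\<Sum>a<k. \<Sum>b<k. cnj (x a) * y b * (if a = b then 1 else 0))"
    using assms(1) unfolding ocols_def by (intro sum.cong refl) (simp add: sum_distrib_left[symmetric])
  also have "\<dots> = (\<Sum>a<k. cnj (x a) * y a)"
    by (intro sum.cong refl) (simp add: if_distrib cong: if_cong)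
  finally show ?thesis .
qed

lemma bilin:
  "(\<Sum>a<n1. cnj (P a i) * (\<Sum>b<n2. (\<Sum>l<m. U a l * c l * cnj (V b l)) * R b j)) =
   (\<Sum>l<m. (\<Sum>a<n1. cnj (P a i) * U a l) * c l * cnj (\<Sum>b<n2. cnj (R b j) * V b l))"
proof -
  have "(\<Sum>a<n1. cnj (P a i) * (\<Sum>b<n2. (\<Sum>l<m. U a l * c l * cnj (V b l)) * R b j)) =
        (\<Sum>a<n1. \<Sum>b<n2. \<Sum>l<m. cnj (P a i) * U a l * c l * cnj (V b l) * R b j)"
    by (simp add: sum_distrib_left sum_distrib_right mult_ac)
  also have "\<dots> = (\<Sum>a<n1. \<Sum>l<m. \<Sum>b<n2. cnj (P a i) * U a l * c l * cnj (V b l) * R b j)"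
    by (intro sum.cong refl sum.swap)
  also have "\<dots> = (\<Sum>l<m. \<Sum>a<n1. \<Sum>b<n2. cnj (P a i) * U a l * c l * cnj (V b l) * R b j)"
    by (rule sum.swap)
  also have "\<dots> = (\<Sum>l<m. (\<Sum>a<n1. cnj (P a i) * U a l) * c l * cnj (\<Sum>b<n2. cnj (R b j) * V b l))"
    by (simp add: sum_distrib_left sum_distrib_right mult_ac)
  finally show ?thesis .
qed

lemma range_lemma:
  assumes "ocols q q V" "m \<le> q"
    and "\<forall>i<p. \<forall>j<q. A i j = (\<Sum>l<m. U i l * c l * cnj (V j l))"
    and "\<forall>i<p. \<forall>j<q. A i j = (\<Sum>a<k. Q i a * W a j)"
    and "l < m" "c l \<noteq> 0"
  shows "\<forall>i<p. U i l = (\<Sum>a<k. Q i a * ((\<Sum>j<q. W a j * V j l) / c l))"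
proof (intro allI impI)
  fix i assume i: "i < p"
  have "(\<Sum>j<q. A i j * V j l) = (\<Sum>j<q. \<Sum>l'<m. U i l' * c l' * (cnj (V j l') * V j l))"
    using assms(3) i by (intro sum.cong) (auto simp: sum_distrib_right sum_distrib_left mult_ac)
  also have "\<dots> = (\<Sum>l'<m. U i l' * c l' * (\<Sum>j<q. cnj (V j l') * V j l))"
    by (subst sum.swap) (simp add: sum_distrib_left)
  also have "\<dots> = (\<Sum>l'<m. U i l' * c l' * (if l' = l then 1 else 0))"
    using assms(1,2,5) unfolding ocols_def by (intro sum.cong) auto
  also have "\<dots> = U i l * c l" using assms(5) by (simp add: if_distrib cong: if_cong)
  finally have 1: "(\<Sum>j<q. A i j * V j l) = U i l * c l" .
  have "(\<Sum>j<q. A i j * V j l) = (\<Sum>j<q. \<Sum>a<k. Q i a * (W a j * V j l))"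
    using assms(4) i by (intro sum.cong) (auto simp: sum_distrib_right sum_distrib_left mult_ac)
  also have "\<dots> = (\<Sum>a<k. Q i a * (\<Sum>j<q. W a j * V j l))"
    by (subst sum.swap) (simp add: sum_distrib_left)
  finally have 2: "U i l * c l = (\<Sum>a<k. Q i a * (\<Sum>j<q. W a j * V j l))" using 1 by simp
  show "U i l = (\<Sum>a<k. Q i a * ((\<Sum>j<q. W a j * V j l) / c l))"
    using 2 assms(6) by (simp add: sum_divide_distrib[symmetric] field_simps)
qed

lemma mono_s:
  fixes s :: "nat \<Rightarrow> real"
  assumes "\<forall>l. Suc l < m \<longrightarrow> s (Suc l) \<le> s l" "a \<le> b" "b < m"
  shows "s b \<le> s a"
  using assms(2,3)
proof (induction b)
  case 0 then show ?case by simp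
next
  case (Suc b)
  show ?case
  proof (cases "a = Suc b")
    case False
    then have "a \<le> b" using Suc.prems by simp
    then have "s b \<le> s a" using Suc by simp
    moreover have "s (Suc b) \<le> s b" using assms(1) Suc.prems by simp
    ultimately show ?thesis by simp
  qed simp
qed

lemma obtain_r:
  fixes s :: "nat \<Rightarrow> real"
  assumes "\<forall>l. Suc l < m \<longrightarrow> s (Suc l) \<le> s l" "\<forall>l<m. 0 \<le> s l"
  shows "\<exists>r\<le>m. \<forall>l<m. (s l \<noteq> 0 \<longleftrightarrow> l < r)"
proof (cases "\<exists>l<m. s l = 0")
  case True
  define r where "r = (LEAST l. l < m \<and> s l = 0)"
  have r: "r < m" "s r = 0" using LeastI_ex[OF True[unfolded Bex_def[symmetric]]] True unfolding r_def
    by (metis (mono_tags, lifting) LeastI)+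
  have "\<forall>l<m. (s l \<noteq> 0 \<longleftrightarrow> l < r)"
  proof (intro allI impI iffI)
    fix l assume "l < m" "s l \<noteq> 0"
    show "l < r"
    proof (rule ccontr)
      assume "\<not> l < r"
      then have "s l \<le> s r" using mono_s[OF assms(1)] \<open>l < m\<close> by simp
      then show False using r(2) assms(2) \<open>l < m\<close> \<open>s l \<noteq> 0\<close> by force
    qed
  next
    fix l assume "l < m" "l < r"
    then show "s l \<noteq> 0" unfolding r_def using not_less_Least by blast
  qed
  then show ?thesis using r(1) by (intro exI[of _ r]) simp
next
  case False
  then show ?thesis by (intro exI[of _ m]) auto
qed




lemma slice_sub:
  fixes s g :: "nat \<Rightarrow> real"
  assumes Q1: "ocols n1 k Q1" and Q2: "ocols n2 k Q2" and U: "unitaryM n1 U" and V: "unitaryM n2 V"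
    and QA: "\<forall>i<n1. \<forall>j<n2. A i j = (\<Sum>l<k. (\<Sum>l'<k. Q1 i l' * B l' l) * cnj (Q2 j l))"
    and SA: "\<forall>i<n1. \<forall>j<n2. A i j = (\<Sum>l<min n1 n2. U i l * complex_of_real (s l) * cnj (V j l))"
    and sorted: "\<forall>l. Suc l < min n1 n2 \<longrightarrow> s (Suc l) \<le> s l"
    and nonneg: "\<forall>l<min n1 n2. 0 \<le> s l"
    and gz: "\<forall>l<min n1 n2. s l = 0 \<longrightarrow> g l = 0"
  shows "k \<le> n1 \<and> k \<le> n2 \<and> (\<exists>U' V'. unitaryM k U' \<and> unitaryM k V' \<and>
    (\<forall>i<k. \<forall>j<k. B i j = (\<Sum>l<k. U' i l * complex_of_real (s l) * cnj (V' j l))) \<and>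
    (\<forall>i<n1. \<forall>j<n2. (\<Sum>l<min n1 n2. U i l * complex_of_real (g l) * cnj (V j l)) =
       (\<Sum>l<k. (\<Sum>l'<k. Q1 i l' * (\<Sum>l''<k. U' l' l'' * complex_of_real (g l'') * cnj (V' l l''))) * cnj (Q2 j l))))"
proof -
  define m where "m = min n1 n2"
  have k1: "k \<le> n1" using ocols_le[OF Q1] .
  have k2: "k \<le> n2" using ocols_le[OF Q2] .
  have km: "k \<le> m" using k1 k2 by (simp add: m_def)
  obtain r where r: "r \<le> m" "\<forall>l<m. (s l \<noteq> 0 \<longleftrightarrow> l < r)"
    using obtain_r[of m s] sorted nonneg unfolding m_def by blast
  have Uc: "ocols n1 n1 U" "orows n1 n1 U" and Vc: "ocols n2 n2 V" "orows n2 n2 V"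
    using U V unfolding unitaryM_def by auto
  define X where "X = (\<lambda>c l. \<Sum>a<n1. cnj (Q1 a c) * U a l)"
  define Y where "Y = (\<lambda>c l. \<Sum>b<n2. cnj (Q2 b c) * V b l)"
  have QA1: "\<forall>i<n1. \<forall>j<n2. A i j = (\<Sum>a<k. Q1 i a * (\<Sum>l<k. B a l * cnj (Q2 j l)))"
  proof (intro allI impI)
    fix i j assume "i < n1" "j < n2"
    then have "A i j = (\<Sum>l<k. (\<Sum>l'<k. Q1 i l' * B l' l) * cnj (Q2 j l))" using QA by simp
    also have "\<dots> = (\<Sum>l<k. \<Sum>a<k. Q1 i a * (B a l * cnj (Q2 j l)))"
      by (simp add: sum_distrib_right mult.assoc)
    also have "\<dots> = (\<Sum>a<k. Q1 i a * (\<Sum>l<k. B a l * cnj (Q2 j l)))"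
      by (subst sum.swap) (simp add: sum_distrib_left)
    finally show "A i j = (\<Sum>a<k. Q1 i a * (\<Sum>l<k. B a l * cnj (Q2 j l)))" .
  qed
  have SA': "\<forall>j<n2. \<forall>i<n1. cnj (A i j) = (\<Sum>l<m. V j l * complex_of_real (s l) * cnj (U i l))"
  proof (intro allI impI)
    fix j i assume ji: "j < n2" "i < n1"
    have "cnj (A i j) = cnj (\<Sum>l<m. U i l * complex_of_real (s l) * cnj (V j l))"
      using SA ji unfolding m_def by simp
    also have "\<dots> = (\<Sum>l<m. V j l * complex_of_real (s l) * cnj (U i l))"
      by (simp add: mult.commute mult.left_commute)
    finally show "cnj (A i j) = (\<Sum>l<m. V j l * complex_of_real (s l) * cnj (U i l))" .
  qed
  have QA2: "\<forall>j<n2. \<forall>i<n1. cnj (A i j) = (\<Sum>a<k. Q2 j a * cnj (\<Sum>l'<k. Q1 i l' * B l' a))"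
  proof (intro allI impI)
    fix j i assume ji: "j < n2" "i < n1"
    have "cnj (A i j) = cnj (\<Sum>l<k. (\<Sum>l'<k. Q1 i l' * B l' l) * cnj (Q2 j l))"
      using QA ji by simp
    also have "\<dots> = (\<Sum>a<k. Q2 j a * cnj (\<Sum>l'<k. Q1 i l' * B l' a))"
      by (simp only: cnj_sum complex_cnj_mult complex_cnj_cnj mult.commute)
    finally show "cnj (A i j) = (\<Sum>a<k. Q2 j a * cnj (\<Sum>l'<k. Q1 i l' * B l' a))" .
  qed
  have mle: "m \<le> n2" "m \<le> n1" by (simp_all add: m_def)
  have SAm: "\<forall>i<n1. \<forall>j<n2. A i j = (\<Sum>l<m. U i l * complex_of_real (s l) * cnj (V j l))"
    using SA unfolding m_def .
  have rU: "\<forall>i<n1. U i l = (\<Sum>a<k. Q1 i a * X a l)" if "l < r" for l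
  proof -
    have lm: "l < m" using that r(1) by simp
    have sl: "complex_of_real (s l) \<noteq> 0" using r(2) lm that by simp
    have "\<forall>i<n1. U i l = (\<Sum>a<k. Q1 i a * ((\<Sum>j<n2. (\<Sum>l<k. B a l * cnj (Q2 j l)) * V j l) / complex_of_real (s l)))"
      by (rule range_lemma[OF Vc(1) mle(1) SAm QA1 lm sl])
    then have "\<forall>i<n1. U i l = (\<Sum>a<k. Q1 i a * (\<Sum>i'<n1. cnj (Q1 i' a) * U i' l))"
      by (rule recon[OF Q1])
    then show ?thesis unfolding X_def .
  qed
  have rV: "\<forall>j<n2. V j l = (\<Sum>a<k. Q2 j a * Y a l)" if "l < r" for l
  proof -
    have lm: "l < m" using that r(1) by simp
    have sl: "complex_of_real (s l) \<noteq> 0" using r(2) lm that by simp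
    have "\<forall>j<n2. V j l = (\<Sum>a<k. Q2 j a * ((\<Sum>i<n1. cnj (\<Sum>l'<k. Q1 i l' * B l' a) * U i l) / complex_of_real (s l)))"
      by (rule range_lemma[OF Uc(1) mle(2) SA' QA2 lm sl])
    then have "\<forall>j<n2. V j l = (\<Sum>a<k. Q2 j a * (\<Sum>i'<n2. cnj (Q2 i' a) * V i' l))"
      by (rule recon[OF Q2])
    then show ?thesis unfolding Y_def .
  qed
  have oX: "ocols k r X" unfolding ocols_def
  proof (intro allI impI)
    fix p q assume pq: "p < r" "q < r"
    have "(\<Sum>c<k. cnj (X c p) * X c q) = (\<Sum>i<n1. cnj (\<Sum>a<k. Q1 i a * X a p) * (\<Sum>b<k. Q1 i b * X b q))"
      by (rule isometry[OF Q1, symmetric])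
    also have "\<dots> = (\<Sum>i<n1. cnj (U i p) * U i q)" using rU pq by (intro sum.cong) auto
    also have "\<dots> = (if p = q then 1 else 0)" using Uc(1) pq r(1) km unfolding ocols_def m_def by simp
    finally show "(\<Sum>c<k. cnj (X c p) * X c q) = (if p = q then 1 else 0)" .
  qed
  have oY: "ocols k r Y" unfolding ocols_def
  proof (intro allI impI)
    fix p q assume pq: "p < r" "q < r"
    have "(\<Sum>c<k. cnj (Y c p) * Y c q) = (\<Sum>i<n2. cnj (\<Sum>a<k. Q2 i a * Y a p) * (\<Sum>b<k. Q2 i b * Y b q))"
      by (rule isometry[OF Q2, symmetric])
    also have "\<dots> = (\<Sum>i<n2. cnj (V i p) * V i q)" using rV pq by (intro sum.cong) auto
    also have "\<dots> = (if p = q then 1 else 0)" using Vc(1) pq r(1) km unfolding ocols_def m_def by simp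
    finally show "(\<Sum>c<k. cnj (Y c p) * Y c q) = (if p = q then 1 else 0)" .
  qed
  obtain U' where U': "r \<le> k" "unitaryM k U'" "\<forall>i l. l < r \<longrightarrow> U' i l = X i l"
    using ext_unitary[OF oX] by blast
  obtain V' where V': "unitaryM k V'" "\<forall>i l. l < r \<longrightarrow> V' i l = Y i l"
    using ext_unitary[OF oY] by blast
  have s0: "s l = 0" if "r \<le> l" "l < m" for l using r(2) that by auto
  have g0: "g l = 0" if "r \<le> l" "l < m" for l using gz s0[OF that] that unfolding m_def by simp
  have Beq: "B i j = (\<Sum>l<k. U' i l * complex_of_real (s l) * cnj (V' j l))" if ij: "i < k" "j < k" for i j
  proof -
    have c1: "(\<Sum>b<n2. cnj (Q2 b j) * cnj (A a b)) = cnj (\<Sum>l'<k. Q1 a l' * B l' j)" if "a < n1" for a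
      using proj_coef[OF Q2, where u="\<lambda>b. cnj (A a b)" and z="\<lambda>l. cnj (\<Sum>l'<k. Q1 a l' * B l' l)" and a=j] QA2 that ij by simp
    have c2: "(\<Sum>b<n2. A a b * Q2 b j) = (\<Sum>l'<k. Q1 a l' * B l' j)" if "a < n1" for a
    proof -
      have "(\<Sum>b<n2. A a b * Q2 b j) = cnj (\<Sum>b<n2. cnj (Q2 b j) * cnj (A a b))"
        by (simp add: mult.commute)
      also have "\<dots> = (\<Sum>l'<k. Q1 a l' * B l' j)" unfolding c1[OF that] by simp
      finally show ?thesis .
    qed
    have "B i j = (\<Sum>a<n1. cnj (Q1 a i) * (\<Sum>b<n2. A a b * Q2 b j))"
      using proj_coef[OF Q1, where u="\<lambda>a. \<Sum>b<n2. A a b * Q2 b j" and z="\<lambda>l'. B l' j" and a=i] c2 ij by simp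
    also have "\<dots> = (\<Sum>a<n1. cnj (Q1 a i) * (\<Sum>b<n2. (\<Sum>l<m. U a l * complex_of_real (s l) * cnj (V b l)) * Q2 b j))"
      using SA unfolding m_def by (intro sum.cong refl arg_cong2[where f="(*)"]) auto
    also have "\<dots> = (\<Sum>l<m. X i l * complex_of_real (s l) * cnj (Y j l))"
      unfolding X_def Y_def by (rule bilin)
    also have "\<dots> = (\<Sum>l<r. X i l * complex_of_real (s l) * cnj (Y j l))"
      by (rule sum_restrict) (use r s0 in auto)
    also have "\<dots> = (\<Sum>l<r. U' i l * complex_of_real (s l) * cnj (V' j l))"
      using U'(3) V'(2) by (intro sum.cong) auto
    also have "\<dots> = (\<Sum>l<k. U' i l * complex_of_real (s l) * cnj (V' j l))"
      by (rule sum_restrict[symmetric]) (use U'(1) km s0 in auto)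
    finally show ?thesis .
  qed
  have Geq: "(\<Sum>l<min n1 n2. U i l * complex_of_real (g l) * cnj (V j l)) =
       (\<Sum>l<k. (\<Sum>l'<k. Q1 i l' * (\<Sum>l''<k. U' l' l'' * complex_of_real (g l'') * cnj (V' l l''))) * cnj (Q2 j l))"
    if ij: "i < n1" "j < n2" for i j
  proof -
    have "(\<Sum>l<min n1 n2. U i l * complex_of_real (g l) * cnj (V j l)) = (\<Sum>l<r. U i l * complex_of_real (g l) * cnj (V j l))"
      unfolding m_def[symmetric] by (rule sum_restrict) (use r g0 in auto)
    also have "\<dots> = (\<Sum>l<r. (\<Sum>a<k. Q1 i a * U' a l) * complex_of_real (g l) * cnj (\<Sum>b<k. Q2 j b * V' b l))"
      using rU rV U'(3) V'(2) ij by (intro sum.cong) auto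
    also have "\<dots> = (\<Sum>l<k. (\<Sum>a<k. Q1 i a * U' a l) * complex_of_real (g l) * cnj (\<Sum>b<k. Q2 j b * V' b l))"
      by (rule sum_restrict[symmetric]) (use U'(1) km g0 in auto)
    also have "\<dots> = (\<Sum>l<k. (\<Sum>l'<k. Q1 i l' * (\<Sum>l''<k. U' l' l'' * complex_of_real (g l'') * cnj (V' l l''))) * cnj (Q2 j l))"
      by (rule sandwich)
    finally show ?thesis .
  qed
  show ?thesis using k1 k2 U'(2) V'(1) Beq Geq by blast
qed




lemma mode_prod_tensor: "is_tensor m1 m2 ns (mode_prod m1 m2 ns a M X)"
  unfolding is_tensor_def mode_prod_def by simp

lemma fold_mode_tensor:
  "xs \<noteq> [] \<Longrightarrow> is_tensor m1 m2 ns (fold (\<lambda>a X. mode_prod m1 m2 ns a (F a) X) xs X)"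
proof (induction xs arbitrary: X)
  case Nil then show ?case by simp
next
  case (Cons x xs)
  then show ?case by (cases "xs = []") (auto simp: mode_prod_tensor)
qed

lemma Ltr_tensor: "ns \<noteq> [] \<Longrightarrow> is_tensor m1 m2 ns (Ltr m1 m2 ns Us X)"
  unfolding Ltr_def by (rule fold_mode_tensor) simp

lemma Linv_tensor: "ns \<noteq> [] \<Longrightarrow> is_tensor m1 m2 ns (Linv m1 m2 ns Us al X)"
  unfolding Linv_def by (rule fold_mode_tensor) simp

lemma in_range_upd:
  assumes "in_range m1 m2 ns i1 i2 is" "a < length ns" "j < ns ! a"
  shows "in_range m1 m2 ns i1 i2 (is[a := j])"
  using assms unfolding in_range_def valid_idx_def by (auto simp: nth_list_update)

lemma mode_cancel:
  assumes "a < length ns" "is_tensor m1 m2 ns X"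
    and "\<forall>r<ns!a. \<forall>c<ns!a. (\<Sum>j<ns!a. M' r j * M j c) = (if r = c then 1 else 0)"
  shows "mode_prod m1 m2 ns a M' (mode_prod m1 m2 ns a M X) = X"
proof (intro ext)
  fix i1 i2 "is"
  show "mode_prod m1 m2 ns a M' (mode_prod m1 m2 ns a M X) i1 i2 is = X i1 i2 is"
  proof (cases "in_range m1 m2 ns i1 i2 is")
    case False
    then show ?thesis using assms(2) unfolding mode_prod_def is_tensor_def by simp
  next
    case True
    define n where "n = ns ! a"
    have ia: "is ! a < n" "length is = length ns"
      using True assms(1) unfolding in_range_def valid_idx_def n_def by auto
    have "mode_prod m1 m2 ns a M' (mode_prod m1 m2 ns a M X) i1 i2 is
        = (\<Sum>j<n. M' (is!a) j * (\<Sum>l<n. M j l * X i1 i2 (is[a:=l])))"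
      unfolding mode_prod_def n_def using True ia assms(1)
      by (auto intro!: sum.cong simp: in_range_upd n_def)
    also have "\<dots> = (\<Sum>j<n. \<Sum>l<n. M' (is!a) j * M j l * X i1 i2 (is[a:=l]))"
      by (simp add: sum_distrib_left mult.assoc)
    also have "\<dots> = (\<Sum>l<n. \<Sum>j<n. M' (is!a) j * M j l * X i1 i2 (is[a:=l]))"
      by (rule sum.swap)
    also have "\<dots> = (\<Sum>l<n. (\<Sum>j<n. M' (is!a) j * M j l) * X i1 i2 (is[a:=l]))"
      by (simp add: sum_distrib_right)
    also have "\<dots> = (\<Sum>l<n. (if is!a = l then 1 else 0) * X i1 i2 (is[a:=l]))"
      using assms(3) ia unfolding n_def by (intro sum.cong) auto
    also have "\<dots> = (\<Sum>l<n. if is!a = l then X i1 i2 (is[a:=l]) else 0)" by (intro sum.cong) auto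
    also have "\<dots> = X i1 i2 is" using ia by simp
    finally show ?thesis .
  qed
qed

lemma fold_cancel1:
  assumes "\<forall>a\<in>set xs. \<forall>X. P X \<longrightarrow> f a (g a X) = X" "\<forall>a X. P X \<longrightarrow> P (g a X)" "P X"
  shows "fold f xs (foldr g xs X) = X"
  using assms(1,3)
proof (induction xs arbitrary: X)
  case Nil then show ?case by simp
next
  case (Cons x xs)
  have "P (foldr g xs X)" using Cons.prems(2)
    by (induction xs) (use assms(2) in auto)
  then have "f x (g x (foldr g xs X)) = foldr g xs X" using Cons.prems(1) by simp
  then show ?case using Cons by simp
qed

lemma fold_cancel2:
  assumes "\<forall>a\<in>set xs. \<forall>X. P X \<longrightarrow> g a (f a X) = X" "\<forall>a X. P X \<longrightarrow> P (f a X)" "P X"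
  shows "foldr g xs (fold f xs X) = X"
  using assms(1,3)
proof (induction xs arbitrary: X)
  case Nil then show ?case by simp
next
  case (Cons x xs)
  have "P (f x X)" using assms(2) Cons.prems(2) by blast
  then have "foldr g xs (fold f xs (f x X)) = f x X" using Cons by simp
  then show ?case using Cons.prems by simp
qed

lemma transform_inv:
  assumes "is_transform ns Us al" "a < length ns"
  shows "\<forall>r<ns!a. \<forall>c<ns!a. (\<Sum>j<ns!a. Us a r j * (cnj (Us a c j) / complex_of_real (al a))) = (if r = c then 1 else 0)"
    and "\<forall>r<ns!a. \<forall>c<ns!a. (\<Sum>j<ns!a. (cnj (Us a j r) / complex_of_real (al a)) * Us a j c) = (if r = c then 1 else 0)"
proof -
  have al: "al a > 0" and h1: "\<forall>r<ns!a. \<forall>c<ns!a. (\<Sum>l<ns ! a. Us a r l * cnj (Us a c l)) = (if r = c then of_real (al a) else 0)"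
    and h2: "\<forall>r<ns!a. \<forall>c<ns!a. (\<Sum>l<ns ! a. cnj (Us a l r) * Us a l c) = (if r = c then of_real (al a) else 0)"
    using assms unfolding is_transform_def by auto
  show "\<forall>r<ns!a. \<forall>c<ns!a. (\<Sum>j<ns!a. Us a r j * (cnj (Us a c j) / complex_of_real (al a))) = (if r = c then 1 else 0)"
  proof (intro allI impI)
    fix r c assume "r < ns!a" "c < ns!a"
    have "(\<Sum>j<ns!a. Us a r j * (cnj (Us a c j) / complex_of_real (al a))) = (\<Sum>j<ns!a. Us a r j * cnj (Us a c j)) / complex_of_real (al a)"
      by (simp add: sum_divide_distrib)
    then show "(\<Sum>j<ns!a. Us a r j * (cnj (Us a c j) / complex_of_real (al a))) = (if r = c then 1 else 0)"
      using h1 \<open>r < ns!a\<close> \<open>c < ns!a\<close> al by simp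
  qed
  show "\<forall>r<ns!a. \<forall>c<ns!a. (\<Sum>j<ns!a. (cnj (Us a j r) / complex_of_real (al a)) * Us a j c) = (if r = c then 1 else 0)"
  proof (intro allI impI)
    fix r c assume "r < ns!a" "c < ns!a"
    have "(\<Sum>j<ns!a. (cnj (Us a j r) / complex_of_real (al a)) * Us a j c) = (\<Sum>j<ns!a. cnj (Us a j r) * Us a j c) / complex_of_real (al a)"
      by (simp add: sum_divide_distrib)
    then show "(\<Sum>j<ns!a. (cnj (Us a j r) / complex_of_real (al a)) * Us a j c) = (if r = c then 1 else 0)"
      using h2 \<open>r < ns!a\<close> \<open>c < ns!a\<close> al by simp
  qed
qed

lemma Ltr_Linv:
  assumes "is_transform ns Us al" "is_tensor m1 m2 ns X"
  shows "Ltr m1 m2 ns Us (Linv m1 m2 ns Us al X) = X"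
  unfolding Ltr_def Linv_def foldr_conv_fold[symmetric]
  apply (rule fold_cancel1[where P="is_tensor m1 m2 ns"])
  using mode_cancel transform_inv[OF assms(1)] assms(2) by (auto simp: mode_prod_tensor)

lemma Linv_Ltr:
  assumes "is_transform ns Us al" "is_tensor m1 m2 ns X"
  shows "Linv m1 m2 ns Us al (Ltr m1 m2 ns Us X) = X"
  unfolding Ltr_def Linv_def foldr_conv_fold[symmetric]
  apply (rule fold_cancel2[where P="is_tensor m1 m2 ns"])
  using mode_cancel transform_inv[OF assms(1)] assms(2) by (auto simp: mode_prod_tensor)

lemma Linv_inj:
  assumes "is_transform ns Us al" "is_tensor m1 m2 ns X" "is_tensor m1 m2 ns Y"
  shows "Linv m1 m2 ns Us al X = Linv m1 m2 ns Us al Y \<longleftrightarrow> X = Y"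
  by (metis Ltr_Linv assms)

lemma tensor_eq:
  assumes "is_transform ns Us al" "is_tensor m1 m2 ns X" "is_tensor m1 m2 ns Y"
  shows "X = Y \<longleftrightarrow> Ltr m1 m2 ns Us X = Ltr m1 m2 ns Us Y"
  by (metis Linv_Ltr assms)

lemma Ltr_tprod:
  assumes "is_transform ns Us al"
  shows "Ltr m1 m2 ns Us (tprod m1 r m2 ns Us al A B) = (\<lambda>i1 i2 is. if in_range m1 m2 ns i1 i2 is
      then (\<Sum>l<r. Ltr m1 r ns Us A i1 l is * Ltr r m2 ns Us B l i2 is) else 0)"
  unfolding tprod_def by (rule Ltr_Linv[OF assms]) (simp add: is_tensor_def)

lemma Ltr_ttrans:
  assumes "is_transform ns Us al"
  shows "Ltr m2 m1 ns Us (ttrans m1 m2 ns Us al A) = (\<lambda>i1 i2 is. if in_range m2 m1 ns i1 i2 is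
      then cnj (Ltr m1 m2 ns Us A i2 i1 is) else 0)"
  unfolding ttrans_def by (rule Ltr_Linv[OF assms]) (simp add: is_tensor_def)

lemma Ltr_trip:
  assumes "is_transform ns Us al"
  shows "Ltr m1 m2 ns Us (tprod m1 r m2 ns Us al (tprod m1 r' r ns Us al X Y) (ttrans m2 r ns Us al Z)) i1 i2 is
    = (if in_range m1 m2 ns i1 i2 is then (\<Sum>l<r. (\<Sum>l'<r'. Ltr m1 r' ns Us X i1 l' is * Ltr r' r ns Us Y l' l is)
         * cnj (Ltr m2 r ns Us Z i2 l is)) else 0)"
  unfolding Ltr_tprod[OF assms] Ltr_ttrans[OF assms]
  by (auto intro!: sum.cong simp: in_range_def)

lemma part_orth_iff:
  assumes "is_transform ns Us al"
  shows "part_orth m k ns Us al Q \<longleftrightarrow> (\<forall>is. valid_idx ns is \<longrightarrow> ocols m k (\<lambda>i j. Ltr m k ns Us Q i j is))"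
proof -
  have "part_orth m k ns Us al Q \<longleftrightarrow>
    (\<lambda>i1 i2 is. if in_range k k ns i1 i2 is then (\<Sum>l<m. Ltr k m ns Us (ttrans m k ns Us al Q) i1 l is * Ltr m k ns Us Q l i2 is) else 0)
    = (\<lambda>i1 i2 is. if in_range k k ns i1 i2 is \<and> i1 = i2 then 1 else 0)"
    unfolding part_orth_def tprod_def tid_def by (rule Linv_inj[OF assms]) (auto simp: is_tensor_def)
  also have "\<dots> \<longleftrightarrow> (\<lambda>i1 i2 is. if in_range k k ns i1 i2 is then (\<Sum>l<m. cnj (Ltr m k ns Us Q l i1 is) * Ltr m k ns Us Q l i2 is) else 0)
    = (\<lambda>i1 i2 is. if in_range k k ns i1 i2 is \<and> i1 = i2 then 1 else 0)"
    unfolding Ltr_ttrans[OF assms]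
    by (intro arg_cong2[where f="(=)"] refl ext) (auto intro!: sum.cong simp: in_range_def)
  also have "\<dots> \<longleftrightarrow> (\<forall>is. valid_idx ns is \<longrightarrow> ocols m k (\<lambda>i j. Ltr m k ns Us Q i j is))"
    unfolding ocols_def fun_eq_iff in_range_def by (auto split: if_splits)
  finally show ?thesis .
qed

lemma orth_iff:
  assumes "is_transform ns Us al"
  shows "orth m ns Us al Q \<longleftrightarrow> (\<forall>is. valid_idx ns is \<longrightarrow> unitaryM m (\<lambda>i j. Ltr m m ns Us Q i j is))"
proof -
  have "tprod m m m ns Us al Q (ttrans m m ns Us al Q) = tid m ns Us al \<longleftrightarrow>
    (\<lambda>i1 i2 is. if in_range m m ns i1 i2 is then (\<Sum>l<m. Ltr m m ns Us Q i1 l is * Ltr m m ns Us (ttrans m m ns Us al Q) l i2 is) else 0)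
    = (\<lambda>i1 i2 is. if in_range m m ns i1 i2 is \<and> i1 = i2 then 1 else 0)"
    unfolding tprod_def tid_def by (rule Linv_inj[OF assms]) (auto simp: is_tensor_def)
  also have "\<dots> \<longleftrightarrow> (\<lambda>i1 i2 is. if in_range m m ns i1 i2 is then (\<Sum>l<m. Ltr m m ns Us Q i1 l is * cnj (Ltr m m ns Us Q i2 l is)) else 0)
    = (\<lambda>i1 i2 is. if in_range m m ns i1 i2 is \<and> i1 = i2 then 1 else 0)"
    unfolding Ltr_ttrans[OF assms]
    by (intro arg_cong2[where f="(=)"] refl ext) (auto intro!: sum.cong simp: in_range_def)
  also have "\<dots> \<longleftrightarrow> (\<forall>is. valid_idx ns is \<longrightarrow> orows m m (\<lambda>i j. Ltr m m ns Us Q i j is))"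
    unfolding orows_def fun_eq_iff in_range_def by (auto split: if_splits)
  finally show ?thesis unfolding orth_def part_orth_iff[OF assms] unitaryM_def by blast
qed

lemma f_diag_fold: "f_diag X \<Longrightarrow> f_diag (fold (\<lambda>a X. mode_prod m1 m2 ns a (F a) X) xs X)"
proof (induction xs arbitrary: X)
  case Nil then show ?case by simp
next
  case (Cons x xs)
  have "f_diag (mode_prod m1 m2 ns x (F x) X)" using Cons.prems unfolding f_diag_def mode_prod_def by simp
  then show ?case using Cons.IH by simp
qed

lemma f_diag_Ltr: "f_diag X \<Longrightarrow> f_diag (Ltr m1 m2 ns Us X)"
  unfolding Ltr_def by (rule f_diag_fold)

lemma f_diag_Linv: "f_diag X \<Longrightarrow> f_diag (Linv m1 m2 ns Us al X)"
  unfolding Linv_def by (rule f_diag_fold)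

lemma diag_red:
  fixes U V :: "nat \<Rightarrow> complex" and D :: cmat and r r' :: nat
  assumes "\<forall>i j. i \<noteq> j \<longrightarrow> D i j = 0"
  shows "(\<Sum>l<r. (\<Sum>l'<r'. U l' * D l' l) * V l) = (\<Sum>l<min r' r. U l * D l l * V l)"
proof -
  have "(\<Sum>l'<r'. U l' * D l' l) = (if l < r' then U l * D l l else 0)" for l
  proof -
    have "(\<Sum>l'<r'. U l' * D l' l) = (\<Sum>l'<r'. if l' = l then U l * D l l else 0)"
      using assms by (intro sum.cong) auto
    then show ?thesis by simp
  qed
  then have "(\<Sum>l<r. (\<Sum>l'<r'. U l' * D l' l) * V l) = (\<Sum>l<r. (if l < r' then U l * D l l else 0) * V l)" by simp
  also have "\<dots> = (\<Sum>l<min r' r. (if l < r' then U l * D l l else 0) * V l)"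
    by (rule sum_restrict) auto
  also have "\<dots> = (\<Sum>l<min r' r. U l * D l l * V l)" by (intro sum.cong) auto
  finally show ?thesis .
qed

lemma GST_zero:
  assumes "0 \<le> t" "0 \<le> p"
  shows "GST 0 t p = 0"
proof (cases "t = 0")
  case True then show ?thesis by (simp add: GST_def)
next
  case False
  have "0 \<le> gst_delta t p" unfolding gst_delta_def using assms by (auto intro!: add_nonneg_nonneg mult_nonneg_nonneg)
  then show ?thesis using False by (simp add: GST_def)
qed

lemma prod_list_nth: "prod_list (xs :: nat list) = (\<Prod>i<length xs. xs ! i)"
  by (induction xs) (simp_all add: prod.lessThan_Suc_shift del: prod.lessThan_Suc)

lemma lin_bound:
  fixes ns idx :: "nat list"
  assumes "\<forall>a<L. idx!a < ns!a"
  shows "(\<Sum>a<L. idx!a * (\<Prod>b<a. ns!b)) < (\<Prod>b<L. ns!b)"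
  using assms
proof (induction L)
  case 0 then show ?case by simp
next
  case (Suc L)
  have IH: "(\<Sum>a<L. idx!a * (\<Prod>b<a. ns!b)) < (\<Prod>b<L. ns!b)" using Suc by simp
  have "Suc (idx!L) \<le> ns!L" using Suc.prems[rule_format, of L] by simp
  then have "Suc (idx!L) * (\<Prod>b<L. ns!b) \<le> ns!L * (\<Prod>b<L. ns!b)" by (rule mult_right_mono) simp
  then show ?case using IH by (simp add: algebra_simps)
qed

lemma lin_idx_le:
  assumes "valid_idx ns is"
  shows "lin_idx ns is \<le> prod_list ns"
proof -
  have "(\<Sum>a<length ns. is!a * (\<Prod>b<a. ns!b)) < (\<Prod>b<length ns. ns!b)"
    using assms unfolding valid_idx_def by (intro lin_bound) auto
  then show ?thesis unfolding lin_idx_def prod_list_nth by simp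
qed

lemma valid_exists: "\<forall>x\<in>set ns. 0 < x \<Longrightarrow> valid_idx ns (replicate (length ns) 0)"
  unfolding valid_idx_def by auto

lemma unitary_cong:
  assumes "unitaryM m M" "\<forall>i<m. \<forall>j<m. M' i j = M i j"
  shows "unitaryM m M'"
proof -
  have "\<forall>i<m. \<forall>j<m. (\<Sum>l<m. cnj (M' l i) * M' l j) = (\<Sum>l<m. cnj (M l i) * M l j)"
    using assms(2) by (auto intro!: sum.cong)
  moreover have "\<forall>i<m. \<forall>j<m. (\<Sum>l<m. M' i l * cnj (M' j l)) = (\<Sum>l<m. M i l * cnj (M j l))"
    using assms(2) by (auto intro!: sum.cong)
  ultimately show ?thesis using assms(1) unfolding unitaryM_def ocols_def orows_def by simp
qed




definition GhD :: "nat \<Rightarrow> nat \<Rightarrow> nat list \<Rightarrow> (nat \<Rightarrow> cmat) \<Rightarrow> (nat \<Rightarrow> nat \<Rightarrow> real) \<Rightarrow> real \<Rightarrow> real \<Rightarrow> tensor \<Rightarrow> tensor" where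
  "GhD m1 m2 ns Us w p tau S = (\<lambda>i1 i2 is. if in_range m1 m2 ns i1 i2 is \<and> i1 = i2
                 then complex_of_real (GST (Re (Ltr m1 m2 ns Us S i1 i1 is))
                                           (tau * w (Suc i1) (lin_idx ns is)) p)
                 else 0)"

lemma is_gtsvt_alt:
  "is_gtsvt m1 m2 ns Us al w p tau A X \<longleftrightarrow> (\<exists>U S V. is_TSVD m1 m2 ns Us al A U S V \<and>
     X = tprod m1 m2 m2 ns Us al (tprod m1 m1 m2 ns Us al U (Linv m1 m2 ns Us al (GhD m1 m2 ns Us w p tau S)))
           (ttrans m2 m2 ns Us al V))"
  unfolding is_gtsvt_def GhD_def ..

lemma trip_diag:
  assumes "is_transform ns Us al" "f_diag (Ltr m1 m2 ns Us D)"
  shows "Ltr m1 m2 ns Us (tprod m1 m2 m2 ns Us al (tprod m1 m1 m2 ns Us al U D) (ttrans m2 m2 ns Us al V)) i j is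
    = (if in_range m1 m2 ns i j is then (\<Sum>l<min m1 m2. Ltr m1 m1 ns Us U i l is * Ltr m1 m2 ns Us D l l is
         * cnj (Ltr m2 m2 ns Us V j l is)) else 0)"
  unfolding Ltr_trip[OF assms(1)]
  using diag_red[where D="\<lambda>a b. Ltr m1 m2 ns Us D a b is" and r=m2 and U="\<lambda>l. Ltr m1 m1 ns Us U i l is" and r'=m1 and V="\<lambda>l. cnj (Ltr m2 m2 ns Us V j l is)"]
    assms(2) unfolding f_diag_def by simp

lemma GhD_tensor: "is_tensor m1 m2 ns (GhD m1 m2 ns Us w p tau S)"
  unfolding is_tensor_def GhD_def by simp

lemma GhD_diag: "f_diag (GhD m1 m2 ns Us w p tau S)"
  unfolding f_diag_def GhD_def by simp

lemma gtsvt_hat: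
  assumes "is_transform ns Us al"
  shows "Ltr m1 m2 ns Us (tprod m1 m2 m2 ns Us al (tprod m1 m1 m2 ns Us al U (Linv m1 m2 ns Us al (GhD m1 m2 ns Us w p tau S)))
           (ttrans m2 m2 ns Us al V)) i j is
    = (if in_range m1 m2 ns i j is then (\<Sum>l<min m1 m2. Ltr m1 m1 ns Us U i l is *
         complex_of_real (GST (Re (Ltr m1 m2 ns Us S l l is)) (tau * w (Suc l) (lin_idx ns is)) p)
         * cnj (Ltr m2 m2 ns Us V j l is)) else 0)"
proof -
  have L: "Ltr m1 m2 ns Us (Linv m1 m2 ns Us al (GhD m1 m2 ns Us w p tau S)) = GhD m1 m2 ns Us w p tau S"
    by (rule Ltr_Linv[OF assms GhD_tensor])
  have d: "f_diag (Ltr m1 m2 ns Us (Linv m1 m2 ns Us al (GhD m1 m2 ns Us w p tau S)))"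
    unfolding L by (rule GhD_diag)
  show ?thesis
    unfolding trip_diag[OF assms d] L
    by (auto intro!: sum.cong simp: GhD_def in_range_def)
qed

lemma tsvd_hat:
  assumes "is_transform ns Us al" "is_TSVD m1 m2 ns Us al A U S V" "in_range m1 m2 ns i j is"
  shows "Ltr m1 m2 ns Us A i j is = (\<Sum>l<min m1 m2. Ltr m1 m1 ns Us U i l is *
         complex_of_real (Re (Ltr m1 m2 ns Us S l l is)) * cnj (Ltr m2 m2 ns Us V j l is))"
proof -
  have d: "f_diag (Ltr m1 m2 ns Us S)" using assms(2) f_diag_Ltr unfolding is_TSVD_def by blast
  have v: "valid_idx ns is" using assms(3) unfolding in_range_def by simp
  have r: "Ltr m1 m2 ns Us S l l is = complex_of_real (Re (Ltr m1 m2 ns Us S l l is))" if "l < min m1 m2" for l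
    using assms(2) v that unfolding is_TSVD_def by (metis Reals_cases Re_complex_of_real)
  have "Ltr m1 m2 ns Us A i j is = (\<Sum>l<min m1 m2. Ltr m1 m1 ns Us U i l is * Ltr m1 m2 ns Us S l l is
         * cnj (Ltr m2 m2 ns Us V j l is))"
    using assms(2,3) trip_diag[OF assms(1) d] unfolding is_TSVD_def by simp
  also have "\<dots> = (\<Sum>l<min m1 m2. Ltr m1 m1 ns Us U i l is *
         complex_of_real (Re (Ltr m1 m2 ns Us S l l is)) * cnj (Ltr m2 m2 ns Us V j l is))"
    using r by (intro sum.cong) auto
  finally show ?thesis .
qed

lemma trip_tensor:
  assumes "ns \<noteq> []"
  shows "is_tensor m1 m2 ns (tprod m1 r m2 ns Us al X Y)"
  unfolding tprod_def by (rule Linv_tensor[OF assms])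




lemma weight_nonneg:
  fixes tau :: real and w :: "nat \<Rightarrow> nat \<Rightarrow> real"
  assumes "0 < tau" "\<forall>i j. 1 \<le> i \<longrightarrow> 1 \<le> j \<longrightarrow> j \<le> prod_list ns \<longrightarrow> 0 \<le> w i j" "valid_idx ns is"
  shows "0 \<le> tau * w (Suc l) (lin_idx ns is)"
proof -
  have "1 \<le> lin_idx ns is" unfolding lin_idx_def by simp
  then have "0 \<le> w (Suc l) (lin_idx ns is)" using assms(2) lin_idx_le[OF assms(3)] by simp
  then show ?thesis using assms(1) by simp
qed

lemma sub_dir:
  assumes nsne: "ns \<noteq> []" and pos: "\<forall>x\<in>set ns. 0 < x" and tr: "is_transform ns Us al"
    and tau: "0 < tau" and p: "0 \<le> p"
    and wnn: "\<forall>i j. 1 \<le> i \<longrightarrow> 1 \<le> j \<longrightarrow> j \<le> prod_list ns \<longrightarrow> 0 \<le> w i j"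
    and tB: "is_tensor k k ns B"
    and po1: "part_orth n1 k ns Us al Q1" and po2: "part_orth n2 k ns Us al Q2"
    and X: "is_gtsvt n1 n2 ns Us al w p tau
              (tprod n1 k n2 ns Us al (tprod n1 k k ns Us al Q1 B) (ttrans n2 k ns Us al Q2)) X"
  shows "\<exists>Y. is_gtsvt k k ns Us al w p tau B Y \<and>
      X = tprod n1 k n2 ns Us al (tprod n1 k k ns Us al Q1 Y) (ttrans n2 k ns Us al Q2)"
proof -
  let ?A = "tprod n1 k n2 ns Us al (tprod n1 k k ns Us al Q1 B) (ttrans n2 k ns Us al Q2)"
  obtain U S V where tsvd: "is_TSVD n1 n2 ns Us al ?A U S V"
    and Xd: "X = tprod n1 n2 n2 ns Us al (tprod n1 n1 n2 ns Us al U (Linv n1 n2 ns Us al (GhD n1 n2 ns Us w p tau S)))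
           (ttrans n2 n2 ns Us al V)"
    using X unfolding is_gtsvt_alt by blast
  let ?Q1h = "Ltr n1 k ns Us Q1"
  let ?Q2h = "Ltr n2 k ns Us Q2"
  let ?Bh = "Ltr k k ns Us B"
  let ?Uh = "Ltr n1 n1 ns Us U"
  let ?Vh = "Ltr n2 n2 ns Us V"
  let ?Sh = "Ltr n1 n2 ns Us S"
  let ?g = "\<lambda>l is. GST (Re (?Sh l l is)) (tau * w (Suc l) (lin_idx ns is)) p"
  have oQ1: "ocols n1 k (\<lambda>i j. ?Q1h i j is)" if "valid_idx ns is" for "is"
    using po1 that unfolding part_orth_iff[OF tr] by blast
  have oQ2: "ocols n2 k (\<lambda>i j. ?Q2h i j is)" if "valid_idx ns is" for "is"
    using po2 that unfolding part_orth_iff[OF tr] by blast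
  have kle: "k \<le> n1" "k \<le> n2"
    using ocols_le[OF oQ1[OF valid_exists[OF pos]]] ocols_le[OF oQ2[OF valid_exists[OF pos]]] by auto
  have Sreal: "?Sh l l is = complex_of_real (Re (?Sh l l is))" if "valid_idx ns is" "l < min n1 n2" for l "is"
    using tsvd that unfolding is_TSVD_def by (metis Reals_cases Re_complex_of_real)
  have slice: "\<forall>is. \<exists>UV. valid_idx ns is \<longrightarrow> (unitaryM k (fst UV) \<and> unitaryM k (snd UV) \<and>
      (\<forall>i<k. \<forall>j<k. ?Bh i j is = (\<Sum>l<k. fst UV i l * complex_of_real (Re (?Sh l l is)) * cnj (snd UV j l))) \<and>
      (\<forall>i<n1. \<forall>j<n2. (\<Sum>l<min n1 n2. ?Uh i l is * complex_of_real (?g l is) * cnj (?Vh j l is)) =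
        (\<Sum>l<k. (\<Sum>l'<k. ?Q1h i l' is * (\<Sum>l''<k. fst UV l' l'' * complex_of_real (?g l'' is) * cnj (snd UV l l''))) * cnj (?Q2h j l is))))"
  proof
    fix "is"
    show "\<exists>UV. valid_idx ns is \<longrightarrow> (unitaryM k (fst UV) \<and> unitaryM k (snd UV) \<and>
      (\<forall>i<k. \<forall>j<k. ?Bh i j is = (\<Sum>l<k. fst UV i l * complex_of_real (Re (?Sh l l is)) * cnj (snd UV j l))) \<and>
      (\<forall>i<n1. \<forall>j<n2. (\<Sum>l<min n1 n2. ?Uh i l is * complex_of_real (?g l is) * cnj (?Vh j l is)) =
        (\<Sum>l<k. (\<Sum>l'<k. ?Q1h i l' is * (\<Sum>l''<k. fst UV l' l'' * complex_of_real (?g l'' is) * cnj (snd UV l l''))) * cnj (?Q2h j l is))))"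
    proof (cases "valid_idx ns is")
      case False then show ?thesis by blast
    next
      case v: True
      have uU: "unitaryM n1 (\<lambda>i j. ?Uh i j is)" using tsvd v unfolding is_TSVD_def orth_iff[OF tr] by blast
      have uV: "unitaryM n2 (\<lambda>i j. ?Vh i j is)" using tsvd v unfolding is_TSVD_def orth_iff[OF tr] by blast
      have QA: "\<forall>i<n1. \<forall>j<n2. Ltr n1 n2 ns Us ?A i j is = (\<Sum>l<k. (\<Sum>l'<k. ?Q1h i l' is * ?Bh l' l is) * cnj (?Q2h j l is))"
        using v unfolding Ltr_trip[OF tr] by (simp add: in_range_def)
      have SA: "\<forall>i<n1. \<forall>j<n2. Ltr n1 n2 ns Us ?A i j is = (\<Sum>l<min n1 n2. ?Uh i l is * complex_of_real (Re (?Sh l l is)) * cnj (?Vh j l is))"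
        using v tsvd_hat[OF tr tsvd] by (simp add: in_range_def)
      have sorted: "\<forall>l. Suc l < min n1 n2 \<longrightarrow> Re (?Sh (Suc l) (Suc l) is) \<le> Re (?Sh l l is)"
        using tsvd v unfolding is_TSVD_def by blast
      have nonneg: "\<forall>l<min n1 n2. 0 \<le> Re (?Sh l l is)"
        using tsvd v unfolding is_TSVD_def by blast
      have gz: "\<forall>l<min n1 n2. Re (?Sh l l is) = 0 \<longrightarrow> ?g l is = 0"
        using GST_zero[OF weight_nonneg[OF tau wnn v] p] by simp
      obtain U' V' where UV': "unitaryM k U'" "unitaryM k V'"
        "\<forall>i<k. \<forall>j<k. ?Bh i j is = (\<Sum>l<k. U' i l * complex_of_real (Re (?Sh l l is)) * cnj (V' j l))"
        "\<forall>i<n1. \<forall>j<n2. (\<Sum>l<min n1 n2. ?Uh i l is * complex_of_real (?g l is) * cnj (?Vh j l is)) =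
          (\<Sum>l<k. (\<Sum>l'<k. ?Q1h i l' is * (\<Sum>l''<k. U' l' l'' * complex_of_real (?g l'' is) * cnj (V' l l''))) * cnj (?Q2h j l is))"
        using slice_sub[OF oQ1[OF v] oQ2[OF v] uU uV QA SA sorted nonneg gz] by blast
      show ?thesis by (rule exI[of _ "(U', V')"]) (use UV' in simp)
    qed
  qed
  obtain UV where UV: "\<forall>is. valid_idx ns is \<longrightarrow> (unitaryM k (fst (UV is)) \<and> unitaryM k (snd (UV is)) \<and>
      (\<forall>i<k. \<forall>j<k. ?Bh i j is = (\<Sum>l<k. fst (UV is) i l * complex_of_real (Re (?Sh l l is)) * cnj (snd (UV is) j l))) \<and>
      (\<forall>i<n1. \<forall>j<n2. (\<Sum>l<min n1 n2. ?Uh i l is * complex_of_real (?g l is) * cnj (?Vh j l is)) =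
        (\<Sum>l<k. (\<Sum>l'<k. ?Q1h i l' is * (\<Sum>l''<k. fst (UV is) l' l'' * complex_of_real (?g l'' is) * cnj (snd (UV is) l l''))) * cnj (?Q2h j l is))))"
    using choice[OF slice] by blast
  define U'h where "U'h = (\<lambda>i1 i2 is. if in_range k k ns i1 i2 is then fst (UV is) i1 i2 else 0)"
  define V'h where "V'h = (\<lambda>i1 i2 is. if in_range k k ns i1 i2 is then snd (UV is) i1 i2 else 0)"
  define S'h where "S'h = (\<lambda>i1 i2 is. if in_range k k ns i1 i2 is \<and> i1 = i2 then ?Sh i1 i1 is else 0)"
  define U' where "U' = Linv k k ns Us al U'h"
  define V' where "V' = Linv k k ns Us al V'h"
  define S' where "S' = Linv k k ns Us al S'h"
  define Y where "Y = tprod k k k ns Us al (tprod k k k ns Us al U' (Linv k k ns Us al (GhD k k ns Us w p tau S')))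
           (ttrans k k ns Us al V')"
  have LU': "Ltr k k ns Us U' = U'h" unfolding U'_def by (rule Ltr_Linv[OF tr]) (simp add: is_tensor_def U'h_def)
  have LV': "Ltr k k ns Us V' = V'h" unfolding V'_def by (rule Ltr_Linv[OF tr]) (simp add: is_tensor_def V'h_def)
  have LS': "Ltr k k ns Us S' = S'h" unfolding S'_def by (rule Ltr_Linv[OF tr]) (simp add: is_tensor_def S'h_def)
  have dS': "f_diag S'h" unfolding f_diag_def S'h_def by simp
  have orthU': "orth k ns Us al U'"
    unfolding orth_iff[OF tr] LU'
  proof (intro allI impI)
    fix "is" assume v: "valid_idx ns is"
    show "unitaryM k (\<lambda>i j. U'h i j is)"
      by (rule unitary_cong[of k "fst (UV is)"]) (use UV v in \<open>auto simp: U'h_def in_range_def\<close>)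
  qed
  have orthV': "orth k ns Us al V'"
    unfolding orth_iff[OF tr] LV'
  proof (intro allI impI)
    fix "is" assume v: "valid_idx ns is"
    show "unitaryM k (\<lambda>i j. V'h i j is)"
      by (rule unitary_cong[of k "snd (UV is)"]) (use UV v in \<open>auto simp: V'h_def in_range_def\<close>)
  qed
  have Beq: "B = tprod k k k ns Us al (tprod k k k ns Us al U' S') (ttrans k k ns Us al V')"
  proof -
    have "Ltr k k ns Us B i j is = Ltr k k ns Us (tprod k k k ns Us al (tprod k k k ns Us al U' S') (ttrans k k ns Us al V')) i j is" for i j "is"
    proof (cases "in_range k k ns i j is")
      case False
      then show ?thesis
        using Ltr_tensor[OF nsne, of k k Us B] unfolding trip_diag[OF tr, of k k S', unfolded LS', OF dS'] is_tensor_def by simp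
    next
      case True
      then have v: "valid_idx ns is" and ij: "i < k" "j < k" unfolding in_range_def by auto
      have "Ltr k k ns Us B i j is = (\<Sum>l<k. fst (UV is) i l * complex_of_real (Re (?Sh l l is)) * cnj (snd (UV is) j l))"
        using UV v ij by blast
      also have "\<dots> = (\<Sum>l<min k k. U'h i l is * S'h l l is * cnj (V'h j l is))"
        using Sreal[OF v] kle ij v by (auto intro!: sum.cong simp: U'h_def V'h_def S'h_def in_range_def)
      finally show ?thesis
        unfolding trip_diag[OF tr, of k k S', unfolded LS', OF dS'] LU' LV' using True by simp
    qed
    then show ?thesis
      by (subst tensor_eq[OF tr tB trip_tensor[OF nsne]]) (simp add: fun_eq_iff)
  qed
  have tsvdB: "is_TSVD k k ns Us al B U' S' V'"
    unfolding is_TSVD_def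
  proof (intro conjI)
    show "is_tensor k k ns U'" "is_tensor k k ns S'" "is_tensor k k ns V'"
      unfolding U'_def S'_def V'_def by (simp_all add: Linv_tensor[OF nsne])
    show "orth k ns Us al U'" "orth k ns Us al V'" by (fact orthU', fact orthV')
    show "f_diag S'" unfolding S'_def by (rule f_diag_Linv[OF dS'])
    show "B = tprod k k k ns Us al (tprod k k k ns Us al U' S') (ttrans k k ns Us al V')" by (fact Beq)
    show "\<forall>is. valid_idx ns is \<longrightarrow>
        (\<forall>i<min k k. Ltr k k ns Us S' i i is \<in> \<real> \<and> 0 \<le> Re (Ltr k k ns Us S' i i is)) \<and>
        (\<forall>i. Suc i < min k k \<longrightarrow> Re (Ltr k k ns Us S' (Suc i) (Suc i) is) \<le> Re (Ltr k k ns Us S' i i is))"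
      unfolding LS' S'h_def using tsvd kle unfolding is_TSVD_def in_range_def by auto
  qed
  have gB: "is_gtsvt k k ns Us al w p tau B Y"
    unfolding is_gtsvt_alt Y_def using tsvdB by blast
  have LY: "Ltr k k ns Us Y a b is = (\<Sum>l''<k. fst (UV is) a l'' * complex_of_real (?g l'' is) * cnj (snd (UV is) b l''))"
    if v: "valid_idx ns is" and ab: "a < k" "b < k" for a b "is"
  proof -
    have "Ltr k k ns Us Y a b is = (\<Sum>l<min k k. U'h a l is *
         complex_of_real (GST (Re (S'h l l is)) (tau * w (Suc l) (lin_idx ns is)) p) * cnj (V'h b l is))"
      unfolding Y_def gtsvt_hat[OF tr] LU' LV' LS' using v ab by (simp add: in_range_def)
    also have "\<dots> = (\<Sum>l''<k. fst (UV is) a l'' * complex_of_real (?g l'' is) * cnj (snd (UV is) b l''))"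
      using v ab by (auto intro!: sum.cong simp: U'h_def V'h_def S'h_def in_range_def)
    finally show ?thesis .
  qed
  have XY: "X = tprod n1 k n2 ns Us al (tprod n1 k k ns Us al Q1 Y) (ttrans n2 k ns Us al Q2)"
  proof -
    have "Ltr n1 n2 ns Us X i j is = Ltr n1 n2 ns Us (tprod n1 k n2 ns Us al (tprod n1 k k ns Us al Q1 Y) (ttrans n2 k ns Us al Q2)) i j is" for i j "is"
    proof (cases "in_range n1 n2 ns i j is")
      case False
      then show ?thesis unfolding Xd gtsvt_hat[OF tr] Ltr_trip[OF tr] by simp
    next
      case True
      then have v: "valid_idx ns is" and ij: "i < n1" "j < n2" unfolding in_range_def by auto
      have "Ltr n1 n2 ns Us X i j is = (\<Sum>l<min n1 n2. ?Uh i l is * complex_of_real (?g l is) * cnj (?Vh j l is))"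
        unfolding Xd gtsvt_hat[OF tr] using True by simp
      also have "\<dots> = (\<Sum>l<k. (\<Sum>l'<k. ?Q1h i l' is * (\<Sum>l''<k. fst (UV is) l' l'' * complex_of_real (?g l'' is) * cnj (snd (UV is) l l''))) * cnj (?Q2h j l is))"
        using UV v ij by blast
      also have "\<dots> = (\<Sum>l<k. (\<Sum>l'<k. ?Q1h i l' is * Ltr k k ns Us Y l' l is) * cnj (?Q2h j l is))"
        using LY[OF v] by (auto intro!: sum.cong)
      finally show ?thesis unfolding Ltr_trip[OF tr] using True by simp
    qed
    then show ?thesis
      unfolding Xd by (subst tensor_eq[OF tr trip_tensor[OF nsne] trip_tensor[OF nsne]]) (simp add: fun_eq_iff)
  qed
  show ?thesis using gB XY by blast
qed




lemma sup_dir: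
  assumes nsne: "ns \<noteq> []" and pos: "\<forall>x\<in>set ns. 0 < x" and tr: "is_transform ns Us al"
    and tau: "0 < tau" and p: "0 \<le> p"
    and wnn: "\<forall>i j. 1 \<le> i \<longrightarrow> 1 \<le> j \<longrightarrow> j \<le> prod_list ns \<longrightarrow> 0 \<le> w i j"
    and tB: "is_tensor k k ns B"
    and po1: "part_orth n1 k ns Us al Q1" and po2: "part_orth n2 k ns Us al Q2"
    and Y: "is_gtsvt k k ns Us al w p tau B Y"
  shows "is_gtsvt n1 n2 ns Us al w p tau
              (tprod n1 k n2 ns Us al (tprod n1 k k ns Us al Q1 B) (ttrans n2 k ns Us al Q2))
              (tprod n1 k n2 ns Us al (tprod n1 k k ns Us al Q1 Y) (ttrans n2 k ns Us al Q2))"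
proof -
  let ?A = "tprod n1 k n2 ns Us al (tprod n1 k k ns Us al Q1 B) (ttrans n2 k ns Us al Q2)"
  obtain U' S' V' where tsvdB: "is_TSVD k k ns Us al B U' S' V'"
    and Yd: "Y = tprod k k k ns Us al (tprod k k k ns Us al U' (Linv k k ns Us al (GhD k k ns Us w p tau S')))
           (ttrans k k ns Us al V')"
    using Y unfolding is_gtsvt_alt by blast
  let ?Q1h = "Ltr n1 k ns Us Q1"
  let ?Q2h = "Ltr n2 k ns Us Q2"
  let ?Bh = "Ltr k k ns Us B"
  let ?U'h = "Ltr k k ns Us U'"
  let ?V'h = "Ltr k k ns Us V'"
  let ?S'h = "Ltr k k ns Us S'"
  let ?s = "\<lambda>l is. Re (?S'h l l is)"
  let ?g = "\<lambda>l is. GST (?s l is) (tau * w (Suc l) (lin_idx ns is)) p"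
  have oQ1: "ocols n1 k (\<lambda>i j. ?Q1h i j is)" if "valid_idx ns is" for "is"
    using po1 that unfolding part_orth_iff[OF tr] by blast
  have oQ2: "ocols n2 k (\<lambda>i j. ?Q2h i j is)" if "valid_idx ns is" for "is"
    using po2 that unfolding part_orth_iff[OF tr] by blast
  have kle: "k \<le> n1" "k \<le> n2"
    using ocols_le[OF oQ1[OF valid_exists[OF pos]]] ocols_le[OF oQ2[OF valid_exists[OF pos]]] by auto
  have S'real: "?S'h l l is = complex_of_real (?s l is)" if "valid_idx ns is" "l < k" for l "is"
    using tsvdB that unfolding is_TSVD_def by (metis Reals_cases Re_complex_of_real min.idem)
  have slice: "\<forall>is. \<exists>UV. valid_idx ns is \<longrightarrow> (unitaryM n1 (fst UV) \<and> unitaryM n2 (snd UV) \<and>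
      (\<forall>h i j. i < n1 \<longrightarrow> j < n2 \<longrightarrow>
        (\<Sum>l<min n1 n2. fst UV i l * (if l < k then h l else 0) * cnj (snd UV j l)) =
        (\<Sum>l<k. (\<Sum>l'<k. ?Q1h i l' is * (\<Sum>l''<k. ?U'h l' l'' is * h l'' * cnj (?V'h l l'' is))) * cnj (?Q2h j l is))))"
  proof
    fix "is"
    show "\<exists>UV. valid_idx ns is \<longrightarrow> (unitaryM n1 (fst UV) \<and> unitaryM n2 (snd UV) \<and>
      (\<forall>h i j. i < n1 \<longrightarrow> j < n2 \<longrightarrow>
        (\<Sum>l<min n1 n2. fst UV i l * (if l < k then h l else 0) * cnj (snd UV j l)) =
        (\<Sum>l<k. (\<Sum>l'<k. ?Q1h i l' is * (\<Sum>l''<k. ?U'h l' l'' is * h l'' * cnj (?V'h l l'' is))) * cnj (?Q2h j l is))))"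
    proof (cases "valid_idx ns is")
      case False then show ?thesis by blast
    next
      case v: True
      have uU: "unitaryM k (\<lambda>i j. ?U'h i j is)" using tsvdB v unfolding is_TSVD_def orth_iff[OF tr] by blast
      have uV: "unitaryM k (\<lambda>i j. ?V'h i j is)" using tsvdB v unfolding is_TSVD_def orth_iff[OF tr] by blast
      obtain U V where UV': "unitaryM n1 U" "unitaryM n2 V"
        "\<forall>h i j. i < n1 \<longrightarrow> j < n2 \<longrightarrow>
        (\<Sum>l<min n1 n2. U i l * (if l < k then h l else 0) * cnj (V j l)) =
        (\<Sum>l<k. (\<Sum>l'<k. ?Q1h i l' is * (\<Sum>l''<k. ?U'h l' l'' is * h l'' * cnj (?V'h l l'' is))) * cnj (?Q2h j l is))"
        using slice_sup[OF oQ1[OF v] oQ2[OF v] uU uV] by blast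
      show ?thesis by (rule exI[of _ "(U, V)"]) (use UV' in simp)
    qed
  qed
  obtain UV where UV: "\<forall>is. valid_idx ns is \<longrightarrow> (unitaryM n1 (fst (UV is)) \<and> unitaryM n2 (snd (UV is)) \<and>
      (\<forall>h i j. i < n1 \<longrightarrow> j < n2 \<longrightarrow>
        (\<Sum>l<min n1 n2. fst (UV is) i l * (if l < k then h l else 0) * cnj (snd (UV is) j l)) =
        (\<Sum>l<k. (\<Sum>l'<k. ?Q1h i l' is * (\<Sum>l''<k. ?U'h l' l'' is * h l'' * cnj (?V'h l l'' is))) * cnj (?Q2h j l is))))"
    using choice[OF slice] by blast
  define Uh where "Uh = (\<lambda>i1 i2 is. if in_range n1 n1 ns i1 i2 is then fst (UV is) i1 i2 else 0)"
  define Vh where "Vh = (\<lambda>i1 i2 is. if in_range n2 n2 ns i1 i2 is then snd (UV is) i1 i2 else 0)"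
  define Sh where "Sh = (\<lambda>i1 i2 is. if in_range n1 n2 ns i1 i2 is \<and> i1 = i2 then (if i1 < k then ?S'h i1 i1 is else 0) else 0)"
  define U where "U = Linv n1 n1 ns Us al Uh"
  define V where "V = Linv n2 n2 ns Us al Vh"
  define S where "S = Linv n1 n2 ns Us al Sh"
  define X where "X = tprod n1 n2 n2 ns Us al (tprod n1 n1 n2 ns Us al U (Linv n1 n2 ns Us al (GhD n1 n2 ns Us w p tau S)))
           (ttrans n2 n2 ns Us al V)"
  have LU: "Ltr n1 n1 ns Us U = Uh" unfolding U_def by (rule Ltr_Linv[OF tr]) (simp add: is_tensor_def Uh_def)
  have LV: "Ltr n2 n2 ns Us V = Vh" unfolding V_def by (rule Ltr_Linv[OF tr]) (simp add: is_tensor_def Vh_def)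
  have LS: "Ltr n1 n2 ns Us S = Sh" unfolding S_def by (rule Ltr_Linv[OF tr]) (simp add: is_tensor_def Sh_def)
  have dS: "f_diag Sh" unfolding f_diag_def Sh_def by simp
  have orthU: "orth n1 ns Us al U"
    unfolding orth_iff[OF tr] LU
  proof (intro allI impI)
    fix "is" assume v: "valid_idx ns is"
    show "unitaryM n1 (\<lambda>i j. Uh i j is)"
      by (rule unitary_cong[of n1 "fst (UV is)"]) (use UV v in \<open>auto simp: Uh_def in_range_def\<close>)
  qed
  have orthV: "orth n2 ns Us al V"
    unfolding orth_iff[OF tr] LV
  proof (intro allI impI)
    fix "is" assume v: "valid_idx ns is"
    show "unitaryM n2 (\<lambda>i j. Vh i j is)"
      by (rule unitary_cong[of n2 "snd (UV is)"]) (use UV v in \<open>auto simp: Vh_def in_range_def\<close>)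
  qed
  have Aeq: "?A = tprod n1 n2 n2 ns Us al (tprod n1 n1 n2 ns Us al U S) (ttrans n2 n2 ns Us al V)"
  proof -
    have "Ltr n1 n2 ns Us ?A i j is = Ltr n1 n2 ns Us (tprod n1 n2 n2 ns Us al (tprod n1 n1 n2 ns Us al U S) (ttrans n2 n2 ns Us al V)) i j is" for i j "is"
    proof (cases "in_range n1 n2 ns i j is")
      case False
      then show ?thesis unfolding trip_diag[OF tr, of n1 n2 S, unfolded LS, OF dS] Ltr_trip[OF tr] by simp
    next
      case True
      then have v: "valid_idx ns is" and ij: "i < n1" "j < n2" unfolding in_range_def by auto
      have "Ltr n1 n2 ns Us ?A i j is = (\<Sum>l<k. (\<Sum>l'<k. ?Q1h i l' is * ?Bh l' l is) * cnj (?Q2h j l is))"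
        unfolding Ltr_trip[OF tr] using True by simp
      also have "\<dots> = (\<Sum>l<k. (\<Sum>l'<k. ?Q1h i l' is * (\<Sum>l''<k. ?U'h l' l'' is * complex_of_real (?s l'' is) * cnj (?V'h l l'' is))) * cnj (?Q2h j l is))"
        using tsvd_hat[OF tr tsvdB] v by (auto intro!: sum.cong simp: in_range_def)
      also have "\<dots> = (\<Sum>l<min n1 n2. fst (UV is) i l * (if l < k then complex_of_real (?s l is) else 0) * cnj (snd (UV is) j l))"
        using UV v ij by simp
      also have "\<dots> = (\<Sum>l<min n1 n2. Uh i l is * Sh l l is * cnj (Vh j l is))"
        using v ij S'real[OF v] by (auto intro!: sum.cong simp: Uh_def Vh_def Sh_def in_range_def)
      finally show ?thesis
        unfolding trip_diag[OF tr, of n1 n2 S, unfolded LS, OF dS] LU LV using True by simp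
    qed
    then show ?thesis
      by (subst tensor_eq[OF tr trip_tensor[OF nsne] trip_tensor[OF nsne]]) (simp add: fun_eq_iff)
  qed
  have diagc: "\<forall>is. valid_idx ns is \<longrightarrow>
        (\<forall>i<min n1 n2. Sh i i is \<in> \<real> \<and> 0 \<le> Re (Sh i i is)) \<and>
        (\<forall>i. Suc i < min n1 n2 \<longrightarrow> Re (Sh (Suc i) (Suc i) is) \<le> Re (Sh i i is))"
  proof (rule allI, rule impI, rule conjI)
    fix "is" assume v: "valid_idx ns is"
    have B1: "\<forall>i<k. ?S'h i i is \<in> \<real> \<and> 0 \<le> Re (?S'h i i is)"
      and B2: "\<forall>i. Suc i < k \<longrightarrow> Re (?S'h (Suc i) (Suc i) is) \<le> Re (?S'h i i is)"
      using tsvdB v unfolding is_TSVD_def by auto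
    show "\<forall>i<min n1 n2. Sh i i is \<in> \<real> \<and> 0 \<le> Re (Sh i i is)"
      using B1 v by (auto simp: Sh_def in_range_def)
    show "\<forall>i. Suc i < min n1 n2 \<longrightarrow> Re (Sh (Suc i) (Suc i) is) \<le> Re (Sh i i is)"
    proof (intro allI impI)
      fix i assume i: "Suc i < min n1 n2"
      show "Re (Sh (Suc i) (Suc i) is) \<le> Re (Sh i i is)"
      proof (cases "Suc i < k")
        case True then show ?thesis using B2 i v by (simp add: Sh_def in_range_def)
      next
        case False
        then have "Re (Sh (Suc i) (Suc i) is) = 0" by (simp add: Sh_def)
        moreover have "0 \<le> Re (Sh i i is)" using B1 v i by (auto simp: Sh_def in_range_def)
        ultimately show ?thesis by simp
      qed
    qed
  qed
  have tsvdA: "is_TSVD n1 n2 ns Us al ?A U S V"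
    unfolding is_TSVD_def
  proof (intro conjI)
    show "is_tensor n1 n1 ns U" "is_tensor n1 n2 ns S" "is_tensor n2 n2 ns V"
      unfolding U_def S_def V_def by (simp_all add: Linv_tensor[OF nsne])
    show "orth n1 ns Us al U" "orth n2 ns Us al V" by (fact orthU, fact orthV)
    show "f_diag S" unfolding S_def by (rule f_diag_Linv[OF dS])
    show "?A = tprod n1 n2 n2 ns Us al (tprod n1 n1 n2 ns Us al U S) (ttrans n2 n2 ns Us al V)" by (fact Aeq)
    show "\<forall>is. valid_idx ns is \<longrightarrow>
        (\<forall>i<min n1 n2. Ltr n1 n2 ns Us S i i is \<in> \<real> \<and> 0 \<le> Re (Ltr n1 n2 ns Us S i i is)) \<and>
        (\<forall>i. Suc i < min n1 n2 \<longrightarrow> Re (Ltr n1 n2 ns Us S (Suc i) (Suc i) is) \<le> Re (Ltr n1 n2 ns Us S i i is))"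
      unfolding LS by (fact diagc)
  qed
  have gA: "is_gtsvt n1 n2 ns Us al w p tau ?A X"
    unfolding is_gtsvt_alt X_def using tsvdA by blast
  have LY: "Ltr k k ns Us Y a b is = (\<Sum>l''<k. ?U'h a l'' is * complex_of_real (?g l'' is) * cnj (?V'h b l'' is))"
    if v: "valid_idx ns is" and ab: "a < k" "b < k" for a b "is"
    unfolding Yd gtsvt_hat[OF tr] using v ab by (simp add: in_range_def)
  have XY: "X = tprod n1 k n2 ns Us al (tprod n1 k k ns Us al Q1 Y) (ttrans n2 k ns Us al Q2)"
  proof -
    have "Ltr n1 n2 ns Us X i j is = Ltr n1 n2 ns Us (tprod n1 k n2 ns Us al (tprod n1 k k ns Us al Q1 Y) (ttrans n2 k ns Us al Q2)) i j is" for i j "is"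
    proof (cases "in_range n1 n2 ns i j is")
      case False
      then show ?thesis unfolding X_def gtsvt_hat[OF tr] Ltr_trip[OF tr] by simp
    next
      case True
      then have v: "valid_idx ns is" and ij: "i < n1" "j < n2" unfolding in_range_def by auto
      have g0: "GST (Re (Sh l l is)) (tau * w (Suc l) (lin_idx ns is)) p = (if l < k then ?g l is else 0)"
        if "l < min n1 n2" for l
        using that v GST_zero[OF weight_nonneg[OF tau wnn v] p] by (auto simp: Sh_def in_range_def)
      have "Ltr n1 n2 ns Us X i j is = (\<Sum>l<min n1 n2. Uh i l is *
         complex_of_real (GST (Re (Sh l l is)) (tau * w (Suc l) (lin_idx ns is)) p) * cnj (Vh j l is))"
        unfolding X_def gtsvt_hat[OF tr] LU LV LS using True by simp
      also have "\<dots> = (\<Sum>l<min n1 n2. fst (UV is) i l * (if l < k then complex_of_real (?g l is) else 0) * cnj (snd (UV is) j l))"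
        using v ij g0 by (auto intro!: sum.cong simp: Uh_def Vh_def in_range_def)
      also have "\<dots> = (\<Sum>l<k. (\<Sum>l'<k. ?Q1h i l' is * (\<Sum>l''<k. ?U'h l' l'' is * complex_of_real (?g l'' is) * cnj (?V'h l l'' is))) * cnj (?Q2h j l is))"
        using UV v ij by simp
      also have "\<dots> = (\<Sum>l<k. (\<Sum>l'<k. ?Q1h i l' is * Ltr k k ns Us Y l' l is) * cnj (?Q2h j l is))"
        using LY[OF v] by (auto intro!: sum.cong)
      finally show ?thesis unfolding Ltr_trip[OF tr] using True by simp
    qed
    then show ?thesis
      unfolding X_def by (subst tensor_eq[OF tr trip_tensor[OF nsne] trip_tensor[OF nsne]]) (simp add: fun_eq_iff)
  qed
  show ?thesis using gA XY by simp
qed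


theorem proposition2:
  fixes n1 n2 k :: nat and ns :: "nat list" and Us :: "nat \<Rightarrow> cmat" and al :: "nat \<Rightarrow> real"
    and tau p :: real and w :: "nat \<Rightarrow> nat \<Rightarrow> real" and Q1 Q2 B :: tensor
  assumes "length ns \<ge> 1"
    and "0 < n1" and "0 < n2" and "0 < k" and "\<forall>x\<in>set ns. 0 < x"
    and "is_transform ns Us al"
    and "0 < tau" and "0 < p" and "p < 1"
    and "\<forall>i j. 1 \<le> i \<longrightarrow> 1 \<le> j \<longrightarrow> j \<le> prod_list ns \<longrightarrow> 0 \<le> w i j"
    and "is_tensor n1 k ns Q1" and "is_tensor n2 k ns Q2" and "is_tensor k k ns B"
    and "real_tensor Q1" and "real_tensor Q2" and "real_tensor B"
    and "part_orth n1 k ns Us al Q1" and "part_orth n2 k ns Us al Q2"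
  shows "{X. is_gtsvt n1 n2 ns Us al w p tau
              (tprod n1 k n2 ns Us al (tprod n1 k k ns Us al Q1 B) (ttrans n2 k ns Us al Q2)) X}
       = (\<lambda>Y. tprod n1 k n2 ns Us al (tprod n1 k k ns Us al Q1 Y) (ttrans n2 k ns Us al Q2))
           ` {Y. is_gtsvt k k ns Us al w p tau B Y}"
proof
  have nsne: "ns \<noteq> []" using assms(1) by auto
  have p0: "0 \<le> p" using assms(8) by simp
  show "{X. is_gtsvt n1 n2 ns Us al w p tau
              (tprod n1 k n2 ns Us al (tprod n1 k k ns Us al Q1 B) (ttrans n2 k ns Us al Q2)) X}
       \<subseteq> (\<lambda>Y. tprod n1 k n2 ns Us al (tprod n1 k k ns Us al Q1 Y) (ttrans n2 k ns Us al Q2))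
           ` {Y. is_gtsvt k k ns Us al w p tau B Y}"
  proof
    fix X assume "X \<in> {X. is_gtsvt n1 n2 ns Us al w p tau
              (tprod n1 k n2 ns Us al (tprod n1 k k ns Us al Q1 B) (ttrans n2 k ns Us al Q2)) X}"
    then obtain Y where "is_gtsvt k k ns Us al w p tau B Y"
      "X = tprod n1 k n2 ns Us al (tprod n1 k k ns Us al Q1 Y) (ttrans n2 k ns Us al Q2)"
      using sub_dir[OF nsne assms(5,6,7) p0 assms(10,13,17,18)] by blast
    then show "X \<in> (\<lambda>Y. tprod n1 k n2 ns Us al (tprod n1 k k ns Us al Q1 Y) (ttrans n2 k ns Us al Q2))
           ` {Y. is_gtsvt k k ns Us al w p tau B Y}" by blast
  qed
  show "(\<lambda>Y. tprod n1 k n2 ns Us al (tprod n1 k k ns Us al Q1 Y) (ttrans n2 k ns Us al Q2))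
           ` {Y. is_gtsvt k k ns Us al w p tau B Y}
       \<subseteq> {X. is_gtsvt n1 n2 ns Us al w p tau
              (tprod n1 k n2 ns Us al (tprod n1 k k ns Us al Q1 B) (ttrans n2 k ns Us al Q2)) X}"
    using sup_dir[OF nsne assms(5,6,7) p0 assms(10,13,17,18)] by blast
qed

end
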